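(* Let $A=(a_{ij})\in\mathbb{Q}^{m\times m}$ be Hermitian with (real) eigenvalues $\lambda_1,\ldots,\lambda_m$. Let $r_1=\sum_{i}\lambda_i$, $r_2=\sum_{i<j}\lambda_i\lambda_j$, $\ldots$, $r_m=\lambda_1\cdots\lambda_m$ be the elementary symmetric functions of the eigenvalues, and let $\mathrm{tr}_k(A)=\sum_{1\le i_1<\cdots<i_k\le m}|A_{i_1,\ldots,i_k}|$, where $A_{i_1,\ldots,i_k}$ is the $k\times k$ principal submatrix of $A$ formed by the rows and columns $i_1,\ldots,i_k$. Then $r_j=\mathrm{tr}_j(A)$ for $j=1,\ldots,m$.
   Context: $\mathbb{Q}$ is the real quaternion algebra and $A^H$ the quaternion conjugate transpose; $A$ is Hermitian if $A^H=A$. For a Hermitian quaternion matrix $B$, $|B|$ denotes its determinant in the sense of Zhang's theory of quaternion matrices (for Hermitian $B$ this is a real number, equal to the product of the eigenvalues of $B$); principal submatrices of a Hermitian matrix are Hermitian. *)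

theory Defs
  imports Complex_Main
begin

datatype quat = Quat (Re: real) (Im1: real) (Im2: real) (Im3: real)

instantiation quat :: ring_1
begin
definition "0 = Quat 0 0 0 0"
definition "1 = Quat 1 0 0 0"
definition "x + y = Quat (Re x + Re y) (Im1 x + Im1 y) (Im2 x + Im2 y) (Im3 x + Im3 y)"
definition "x - y = Quat (Re x - Re y) (Im1 x - Im1 y) (Im2 x - Im2 y) (Im3 x - Im3 y)"
definition "- x = Quat (- Re x) (- Im1 x) (- Im2 x) (- Im3 x)"
definition "x * y = Quat
   (Re x * Re y - Im1 x * Im1 y - Im2 x * Im2 y - Im3 x * Im3 y)
   (Re x * Im1 y + Im1 x * Re y + Im2 x * Im3 y - Im3 x * Im2 y)
   (Re x * Im2 y - Im1 x * Im3 y + Im2 x * Re y + Im3 x * Im1 y)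
   (Re x * Im3 y + Im1 x * Im2 y - Im2 x * Im1 y + Im3 x * Re y)"
instance
  by standard (auto simp: zero_quat_def one_quat_def plus_quat_def minus_quat_def
      uminus_quat_def times_quat_def algebra_simps intro: quat.expand)
end

definition qcnj :: "quat \<Rightarrow> quat" where
  "qcnj x = Quat (Re x) (- Im1 x) (- Im2 x) (- Im3 x)"

definition qreal :: "real \<Rightarrow> quat" where
  "qreal r = Quat r 0 0 0"

type_synonym qmat = "nat \<Rightarrow> nat \<Rightarrow> quat"

definition qmat_mult :: "nat \<Rightarrow> qmat \<Rightarrow> qmat \<Rightarrow> qmat" where
  "qmat_mult m A B = (\<lambda>i j. \<Sum>k<m. A i k * B k j)"

definition qmat_H :: "qmat \<Rightarrow> qmat" where
  "qmat_H A = (\<lambda>i j. qcnj (A j i))"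

definition hermitian :: "nat \<Rightarrow> qmat \<Rightarrow> bool" where
  "hermitian m A \<longleftrightarrow> (\<forall>i<m. \<forall>j<m. qmat_H A i j = A i j)"

definition unitary :: "nat \<Rightarrow> qmat \<Rightarrow> bool" where
  "unitary m U \<longleftrightarrow> (\<forall>i<m. \<forall>j<m. qmat_mult m (qmat_H U) U i j = (if i = j then 1 else 0))"

text \<open>lam 0, ..., lam (m-1) are the (real) eigenvalues of the Hermitian matrix A,
  counted with multiplicity: A is unitarily similar to the real diagonal matrix with
  these entries (spectral theorem for Hermitian quaternion matrices).\<close>
definition herm_eigenvalues :: "nat \<Rightarrow> qmat \<Rightarrow> (nat \<Rightarrow> real) \<Rightarrow> bool" where
  "herm_eigenvalues m A lam \<longleftrightarrow> hermitian m A \<and>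
     (\<exists>U. unitary m U \<and>
        (\<forall>i<m. \<forall>j<m. qmat_mult m (qmat_H U) (qmat_mult m A U) i j
                       = (if i = j then qreal (lam i) else 0)))"

definition herm_det :: "nat \<Rightarrow> qmat \<Rightarrow> real" where
  "herm_det m B = (THE d. \<exists>lam. herm_eigenvalues m B lam \<and> d = (\<Prod>i<m. lam i))"

definition principal_sub :: "qmat \<Rightarrow> nat set \<Rightarrow> qmat" where
  "principal_sub A S = (\<lambda>i j. A (sorted_list_of_set S ! i) (sorted_list_of_set S ! j))"

end

theory Submission
  imports Defs "HOL-Computational_Algebra.Polynomial" "Jordan_Normal_Form.Spectral_Radius"
begin


lemma quat_eq_iff: "x = y \<longleftrightarrow> quat.Re x = quat.Re y \<and> Im1 x = Im1 y \<and> Im2 x = Im2 y \<and> Im3 x = Im3 y"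
  by (cases x; cases y) auto

lemma quat_comps [simp]:
  "quat.Re 0 = 0" "Im1 0 = 0" "Im2 0 = 0" "Im3 0 = 0"
  "quat.Re 1 = 1" "Im1 1 = 0" "Im2 1 = 0" "Im3 1 = 0"
  "quat.Re (x + y) = quat.Re x + quat.Re y" "Im1 (x + y) = Im1 x + Im1 y"
  "Im2 (x + y) = Im2 x + Im2 y" "Im3 (x + y) = Im3 x + Im3 y"
  "quat.Re (x - y) = quat.Re x - quat.Re y" "Im1 (x - y) = Im1 x - Im1 y"
  "Im2 (x - y) = Im2 x - Im2 y" "Im3 (x - y) = Im3 x - Im3 y"
  "quat.Re (- x) = - quat.Re x" "Im1 (- x) = - Im1 x"
  "Im2 (- x) = - Im2 x" "Im3 (- x) = - Im3 x"
  "quat.Re (x * y) = quat.Re x * quat.Re y - Im1 x * Im1 y - Im2 x * Im2 y - Im3 x * Im3 y"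
  "Im1 (x * y) = quat.Re x * Im1 y + Im1 x * quat.Re y + Im2 x * Im3 y - Im3 x * Im2 y"
  "Im2 (x * y) = quat.Re x * Im2 y - Im1 x * Im3 y + Im2 x * quat.Re y + Im3 x * Im1 y"
  "Im3 (x * y) = quat.Re x * Im3 y + Im1 x * Im2 y - Im2 x * Im1 y + Im3 x * quat.Re y"
  "quat.Re (qcnj x) = quat.Re x" "Im1 (qcnj x) = - Im1 x" "Im2 (qcnj x) = - Im2 x" "Im3 (qcnj x) = - Im3 x"
  "quat.Re (qreal r) = r" "Im1 (qreal r) = 0" "Im2 (qreal r) = 0" "Im3 (qreal r) = 0"
  by (simp_all add: zero_quat_def one_quat_def plus_quat_def minus_quat_def uminus_quat_def
      times_quat_def qcnj_def qreal_def)

lemma quat_sum_comps [simp]: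
  "quat.Re (sum f A) = (\<Sum>a\<in>A. quat.Re (f a))"
  "Im1 (sum f A) = (\<Sum>a\<in>A. Im1 (f a))"
  "Im2 (sum f A) = (\<Sum>a\<in>A. Im2 (f a))"
  "Im3 (sum f A) = (\<Sum>a\<in>A. Im3 (f a))"
  by (induction A rule: infinite_finite_induct; simp)+

lemma qcnj_mult: "qcnj (x * y) = qcnj y * qcnj x"
  by (simp add: quat_eq_iff algebra_simps)
lemma qcnj_add [simp]: "qcnj (x + y) = qcnj x + qcnj y"
  by (simp add: quat_eq_iff algebra_simps)
lemma qcnj_diff [simp]: "qcnj (x - y) = qcnj x - qcnj y"
  by (simp add: quat_eq_iff algebra_simps)
lemma qcnj_neg [simp]: "qcnj (- x) = - qcnj x"
  by (simp add: quat_eq_iff algebra_simps)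
lemma qcnj_qcnj [simp]: "qcnj (qcnj x) = x"
  by (simp add: quat_eq_iff)
lemma qcnj_0 [simp]: "qcnj 0 = 0" and qcnj_1 [simp]: "qcnj 1 = 1"
  by (simp_all add: quat_eq_iff)
lemma qcnj_qreal [simp]: "qcnj (qreal r) = qreal r"
  by (simp add: quat_eq_iff)
lemma qcnj_sum: "qcnj (sum f A) = (\<Sum>a\<in>A. qcnj (f a))"
  by (simp add: quat_eq_iff sum_negf)
lemma qcnj_eq_iff [simp]: "qcnj x = qcnj y \<longleftrightarrow> x = y"
  by (metis qcnj_qcnj)
lemma qcnj_eq_0_iff [simp]: "qcnj x = 0 \<longleftrightarrow> x = 0"
  by (metis qcnj_qcnj qcnj_0)

lemma qreal_comm: "qreal r * x = x * qreal r"
  by (simp add: quat_eq_iff)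
lemma qreal_0 [simp]: "qreal 0 = 0" and qreal_1 [simp]: "qreal 1 = 1"
  by (simp_all add: quat_eq_iff)
lemma qreal_add: "qreal (a + b) = qreal a + qreal b"
  by (simp add: quat_eq_iff)
lemma qreal_diff: "qreal (a - b) = qreal a - qreal b"
  by (simp add: quat_eq_iff)
lemma qreal_mult: "qreal (a * b) = qreal a * qreal b"
  by (simp add: quat_eq_iff)
lemma qreal_sum: "qreal (sum f A) = (\<Sum>a\<in>A. qreal (f a))"
  by (simp add: quat_eq_iff)
lemma qreal_inj [simp]: "qreal a = qreal b \<longleftrightarrow> a = b"
  by (simp add: quat_eq_iff)
lemma qreal_eq_0 [simp]: "qreal a = 0 \<longleftrightarrow> a = 0"
  by (simp add: quat_eq_iff)
lemma qreal_eq_1 [simp]: "qreal a = 1 \<longleftrightarrow> a = 1"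
  by (simp add: quat_eq_iff)

lemma Re_mult_comm: "quat.Re (x * y) = quat.Re (y * x)"
  by simp

definition nsq :: "quat \<Rightarrow> real" where
  "nsq x = (quat.Re x)^2 + (Im1 x)^2 + (Im2 x)^2 + (Im3 x)^2"

lemma nsq_nonneg: "nsq x \<ge> 0"
  by (simp add: nsq_def)
lemma nsq_eq_0: "nsq x = 0 \<longleftrightarrow> x = 0"
  by (simp add: nsq_def quat_eq_iff add_nonneg_eq_0_iff)
lemma mult_qcnj: "x * qcnj x = qreal (nsq x)"
  by (simp add: quat_eq_iff nsq_def power2_eq_square algebra_simps)
lemma qcnj_mult_self: "qcnj x * x = qreal (nsq x)"
  by (simp add: quat_eq_iff nsq_def power2_eq_square algebra_simps)
lemma Re_mult_qcnj: "quat.Re (qcnj x * x) = nsq x"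
  by (simp add: qcnj_mult_self)


definition Idm :: qmat where "Idm = (\<lambda>i j. if i = j then 1 else 0)"
definition eqn :: "nat \<Rightarrow> qmat \<Rightarrow> qmat \<Rightarrow> bool" where
  "eqn n X Y \<longleftrightarrow> (\<forall>i<n. \<forall>j<n. X i j = Y i j)"
definition mtr :: "nat \<Rightarrow> qmat \<Rightarrow> real" where
  "mtr n X = (\<Sum>i<n. quat.Re (X i i))"

abbreviation mm where "mm \<equiv> qmat_mult"

lemma mm_assoc: "mm n (mm n A B) C = mm n A (mm n B C)"
  unfolding qmat_mult_def
  by (auto simp: fun_eq_iff sum_distrib_left sum_distrib_right mult.assoc intro: sum.swap)

lemma qH_mm: "qmat_H (mm n A B) = mm n (qmat_H B) (qmat_H A)"
  unfolding qmat_mult_def qmat_H_def by (auto simp: fun_eq_iff qcnj_sum qcnj_mult)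

lemma qH_qH [simp]: "qmat_H (qmat_H A) = A"
  unfolding qmat_H_def by simp

lemma qH_Idm [simp]: "qmat_H Idm = Idm"
  unfolding qmat_H_def Idm_def by (auto simp: fun_eq_iff)

lemma eqn_refl [simp]: "eqn n X X" by (simp add: eqn_def)
lemma eqn_sym: "eqn n X Y \<Longrightarrow> eqn n Y X" by (simp add: eqn_def)
lemma eqn_trans [trans]: "eqn n X Y \<Longrightarrow> eqn n Y Z \<Longrightarrow> eqn n X Z" by (simp add: eqn_def)
lemma eqn_eq_trans [trans]: "eqn n X Y \<Longrightarrow> Y = Z \<Longrightarrow> eqn n X Z" by simp
lemma eq_eqn_trans [trans]: "X = Y \<Longrightarrow> eqn n Y Z \<Longrightarrow> eqn n X Z" by simp

lemma eqn_mm_right: "eqn n X Y \<Longrightarrow> j < n \<Longrightarrow> mm n A X i j = mm n A Y i j"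
  unfolding eqn_def qmat_mult_def by auto
lemma eqn_mm_left: "eqn n X Y \<Longrightarrow> i < n \<Longrightarrow> mm n X A i j = mm n Y A i j"
  unfolding eqn_def qmat_mult_def by auto
lemma eqn_mmR: "eqn n X Y \<Longrightarrow> eqn n (mm n A X) (mm n A Y)"
  using eqn_mm_right unfolding eqn_def by blast
lemma eqn_mmL: "eqn n X Y \<Longrightarrow> eqn n (mm n X A) (mm n Y A)"
  using eqn_mm_left unfolding eqn_def by blast
lemma eqn_mm: "eqn n X Y \<Longrightarrow> eqn n X' Y' \<Longrightarrow> eqn n (mm n X X') (mm n Y Y')"
  by (meson eqn_mmL eqn_mmR eqn_trans)

lemma mm_Idm_left [simp]: "i < n \<Longrightarrow> mm n Idm X i j = X i j"
proof -
  assume "i < n"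
  have "mm n Idm X i j = (\<Sum>k<n. if k = i then X k j else 0)"
    unfolding qmat_mult_def Idm_def by (rule sum.cong) auto
  then show ?thesis using \<open>i < n\<close> by simp
qed
lemma mm_Idm_right [simp]: "j < n \<Longrightarrow> mm n X Idm i j = X i j"
proof -
  assume "j < n"
  have "mm n X Idm i j = (\<Sum>k<n. if k = j then X i k else 0)"
    unfolding qmat_mult_def Idm_def by (rule sum.cong) auto
  then show ?thesis using \<open>j < n\<close> by simp
qed
lemma eqn_Idm_left: "eqn n (mm n Idm X) X" by (simp add: eqn_def)
lemma eqn_Idm_right: "eqn n (mm n X Idm) X" by (simp add: eqn_def)

lemma mtr_cong: "eqn n X Y \<Longrightarrow> mtr n X = mtr n Y"
  unfolding eqn_def mtr_def by auto

lemma mtr_comm: "mtr n (mm n X Y) = mtr n (mm n Y X)"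
  unfolding mtr_def qmat_mult_def quat_sum_comps
  by (subst sum.swap, intro sum.cong refl Re_mult_comm)

lemma mtr_HX: "mtr n (mm n (qmat_H X) X) = (\<Sum>i<n. \<Sum>k<n. nsq (X k i))"
  unfolding mtr_def qmat_mult_def qmat_H_def by (simp add: Re_mult_qcnj del: quat_comps)

lemma mtr_HX_0: assumes "mtr n (mm n (qmat_H X) X) = 0" shows "\<forall>i<n. \<forall>k<n. X k i = 0"
proof -
  have "(\<Sum>i<n. \<Sum>k<n. nsq (X k i)) = 0" using assms mtr_HX by simp
  then have "\<forall>i<n. (\<Sum>k<n. nsq (X k i)) = 0"
    by (subst (asm) sum_nonneg_eq_0_iff) (auto intro!: sum_nonneg nsq_nonneg)
  then have "\<forall>i<n. \<forall>k<n. nsq (X k i) = 0"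
    by (auto simp: sum_nonneg_eq_0_iff nsq_nonneg)
  then show ?thesis by (simp add: nsq_eq_0)
qed

lemma mtr_Idm [simp]: "mtr n Idm = n"
  unfolding mtr_def Idm_def by simp

lemma mtr_diff: "mtr n (\<lambda>i j. X i j - Y i j) = mtr n X - mtr n Y"
  unfolding mtr_def by (simp add: sum_subtractf)

lemma mm_diff_left: "mm n (\<lambda>i j. X i j - Y i j) Z = (\<lambda>i j. mm n X Z i j - mm n Y Z i j)"
  unfolding qmat_mult_def by (auto simp: fun_eq_iff algebra_simps sum_subtractf)
lemma mm_diff_right: "mm n Z (\<lambda>i j. X i j - Y i j) = (\<lambda>i j. mm n Z X i j - mm n Z Y i j)"
  unfolding qmat_mult_def by (auto simp: fun_eq_iff algebra_simps sum_subtractf)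
lemma mm_add_left: "mm n (\<lambda>i j. X i j + Y i j) Z = (\<lambda>i j. mm n X Z i j + mm n Y Z i j)"
  unfolding qmat_mult_def by (auto simp: fun_eq_iff algebra_simps sum.distrib)
lemma mm_add_right: "mm n Z (\<lambda>i j. X i j + Y i j) = (\<lambda>i j. mm n Z X i j + mm n Z Y i j)"
  unfolding qmat_mult_def by (auto simp: fun_eq_iff algebra_simps sum.distrib)

lemma unitary_right:
  assumes "unitary n U"
  shows "eqn n (mm n U (qmat_H U)) Idm"
proof -
  define P where "P = mm n U (qmat_H U)"
  have UU: "eqn n (mm n (qmat_H U) U) Idm" using assms unfolding unitary_def eqn_def Idm_def by auto
  have PP: "eqn n (mm n P P) P"
  proof -
    have "mm n P P = mm n U (mm n (mm n (qmat_H U) U) (qmat_H U))"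
      unfolding P_def mm_assoc ..
    also have "eqn n \<dots> (mm n U (mm n Idm (qmat_H U)))"
      by (intro eqn_mmR eqn_mmL UU)
    also have "eqn n \<dots> P" unfolding P_def by (intro eqn_mmR eqn_Idm_left)
    finally show ?thesis .
  qed
  have HP: "qmat_H P = P" unfolding P_def qH_mm by simp
  define Q where "Q = (\<lambda>i j. Idm i j - P i j)"
  have HQ: "qmat_H Q = Q" unfolding Q_def using HP
    by (auto simp: fun_eq_iff qmat_H_def) (metis qmat_H_def qH_Idm)
  have "eqn n (mm n Q Q) Q"
    unfolding eqn_def Q_def mm_diff_left mm_diff_right
    using PP[unfolded eqn_def] by simp
  then have "mtr n (mm n (qmat_H Q) Q) = mtr n Q" using HQ by (simp add: mtr_cong)
  also have "\<dots> = n - mtr n P" unfolding Q_def mtr_diff by simp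
  also have "mtr n P = mtr n (mm n (qmat_H U) U)" unfolding P_def by (rule mtr_comm)
  also have "\<dots> = n" using mtr_cong[OF UU] by simp
  finally have "mtr n (mm n (qmat_H Q) Q) = 0" by simp
  from mtr_HX_0[OF this] show ?thesis unfolding eqn_def Q_def P_def by auto
qed


definition diagm :: "(nat \<Rightarrow> real) \<Rightarrow> qmat" where
  "diagm d = (\<lambda>i j. if i = j then qreal (d i) else 0)"

lemma mm_diag_left: "i < n \<Longrightarrow> mm n (diagm d) V i j = qreal (d i) * V i j"
proof -
  assume i: "i < n"
  have "mm n (diagm d) V i j = (\<Sum>l<n. if l = i then qreal (d i) * V l j else 0)"
    unfolding qmat_mult_def diagm_def by (intro sum.cong refl) auto
  then show ?thesis using i by simp
qed

lemma mm_diag_expand: "mm n U (mm n (diagm d) V) i j = (\<Sum>k<n. U i k * qreal (d k) * V k j)"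
  unfolding qmat_mult_def[of n U] by (intro sum.cong refl) (simp add: mm_diag_left mult.assoc)

lemma mtr_diagm: "mtr n (diagm d) = (\<Sum>i<n. d i)"
  unfolding mtr_def diagm_def by simp

lemma unitary_left: "unitary n U \<Longrightarrow> eqn n (mm n (qmat_H U) U) Idm"
  unfolding unitary_def eqn_def Idm_def by auto

lemma diag_prod:
  assumes U: "unitary n U"
  shows "eqn n (mm n (mm n U (mm n (diagm d1) (qmat_H U))) (mm n U (mm n (diagm d2) (qmat_H U))))
               (mm n U (mm n (diagm (\<lambda>i. d1 i * d2 i)) (qmat_H U)))"
proof -
  have "mm n (mm n U (mm n (diagm d1) (qmat_H U))) (mm n U (mm n (diagm d2) (qmat_H U)))
    = mm n U (mm n (diagm d1) (mm n (mm n (qmat_H U) U) (mm n (diagm d2) (qmat_H U))))"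
    by (simp add: mm_assoc)
  also have "eqn n \<dots> (mm n U (mm n (diagm d1) (mm n Idm (mm n (diagm d2) (qmat_H U)))))"
    by (intro eqn_mmR eqn_mmL unitary_left U)
  also have "eqn n \<dots> (mm n U (mm n (diagm d1) (mm n (diagm d2) (qmat_H U))))"
    by (intro eqn_mmR eqn_Idm_left)
  also have "mm n (diagm d1) (mm n (diagm d2) (qmat_H U)) = mm n (mm n (diagm d1) (diagm d2)) (qmat_H U)"
    by (simp add: mm_assoc)
  also have "eqn n (mm n U \<dots>) (mm n U (mm n (diagm (\<lambda>i. d1 i * d2 i)) (qmat_H U)))"
    by (intro eqn_mmR eqn_mmL) (auto simp: eqn_def mm_diag_left, auto simp: diagm_def qreal_mult)
  finally show ?thesis .
qed

lemma mtr_UDU: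
  assumes U: "unitary n U"
  shows "mtr n (mm n U (mm n (diagm d) (qmat_H U))) = (\<Sum>i<n. d i)"
proof -
  have "mtr n (mm n U (mm n (diagm d) (qmat_H U))) = mtr n (mm n (mm n (diagm d) (qmat_H U)) U)"
    by (rule mtr_comm)
  also have "\<dots> = mtr n (mm n (diagm d) (mm n (qmat_H U) U))" by (simp add: mm_assoc)
  also have "\<dots> = mtr n (mm n (diagm d) Idm)"
    by (intro mtr_cong eqn_mmR unitary_left U)
  also have "\<dots> = mtr n (diagm d)" by (intro mtr_cong eqn_Idm_right)
  finally show ?thesis by (simp add: mtr_diagm)
qed

lemma herm_decomp:
  assumes "herm_eigenvalues n B lam"
  obtains U where "unitary n U" "eqn n B (mm n U (mm n (diagm lam) (qmat_H U)))"
proof -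
  from assms obtain U where U: "unitary n U" and D:
    "\<forall>i<n. \<forall>j<n. mm n (qmat_H U) (mm n B U) i j = (if i = j then qreal (lam i) else 0)"
    unfolding herm_eigenvalues_def by auto
  have D': "eqn n (diagm lam) (mm n (qmat_H U) (mm n B U))"
    using D unfolding eqn_def diagm_def by auto
  have "eqn n (mm n U (mm n (diagm lam) (qmat_H U))) (mm n U (mm n (mm n (qmat_H U) (mm n B U)) (qmat_H U)))"
    by (intro eqn_mmR eqn_mmL D')
  also have "\<dots> = mm n (mm n U (qmat_H U)) (mm n B (mm n U (qmat_H U)))"
    by (simp add: mm_assoc)
  also have "eqn n \<dots> (mm n Idm (mm n B Idm))"
    by (intro eqn_mm eqn_mmR unitary_right U)
  also have "eqn n \<dots> B"
    by (auto simp: eqn_def)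
  finally show ?thesis using that U eqn_sym by blast
qed

definition Nm :: "real \<Rightarrow> qmat \<Rightarrow> qmat" where
  "Nm x B = (\<lambda>i j. (if i = j then qreal x else 0) - B i j)"

lemma Nm_decomp:
  assumes U: "unitary n U" and B: "eqn n B (mm n U (mm n (diagm lam) (qmat_H U)))"
  shows "eqn n (Nm x B) (mm n U (mm n (diagm (\<lambda>i. x - lam i)) (qmat_H U)))"
proof -
  have UU: "eqn n (mm n U (qmat_H U)) Idm" by (rule unitary_right[OF U])
  show ?thesis
    unfolding eqn_def
  proof (intro allI impI)
    fix i j assume ij: "i < n" "j < n"
    have "mm n U (mm n (diagm (\<lambda>i. x - lam i)) (qmat_H U)) i j
      = (\<Sum>k<n. qreal x * (U i k * qmat_H U k j)) - (\<Sum>k<n. U i k * qreal (lam k) * qmat_H U k j)"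
      unfolding mm_diag_expand qreal_diff by (simp add: algebra_simps sum_subtractf qreal_comm)
    also have "(\<Sum>k<n. qreal x * (U i k * qmat_H U k j)) = qreal x * mm n U (qmat_H U) i j"
      by (simp add: qmat_mult_def sum_distrib_left)
    also have "\<dots> = (if i = j then qreal x else 0)" using UU ij by (simp add: eqn_def Idm_def)
    also have "(\<Sum>k<n. U i k * qreal (lam k) * qmat_H U k j) = B i j"
      using B ij by (simp add: eqn_def mm_diag_expand)
    finally show "Nm x B i j = mm n U (mm n (diagm (\<lambda>i. x - lam i)) (qmat_H U)) i j"
      by (simp add: Nm_def)
  qed
qed

lemma inverse_unique:
  assumes "eqn n (mm n N R1) Idm" "eqn n (mm n R2 N) Idm"
  shows "eqn n R1 R2"
proof -
  have "eqn n R1 (mm n Idm R1)" by (rule eqn_sym[OF eqn_Idm_left])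
  also have "eqn n \<dots> (mm n (mm n R2 N) R1)" by (intro eqn_mmL eqn_sym[OF assms(2)])
  also have "\<dots> = mm n R2 (mm n N R1)" by (simp add: mm_assoc)
  also have "eqn n \<dots> (mm n R2 Idm)" by (intro eqn_mmR assms(1))
  also have "eqn n \<dots> R2" by (rule eqn_Idm_right)
  finally show ?thesis .
qed

lemma trace_resolvent:
  assumes ev: "herm_eigenvalues n B lam" and x: "\<forall>i<n. x \<noteq> lam i"
    and R: "eqn n (mm n (Nm x B) R) Idm"
  shows "mtr n R = (\<Sum>i<n. 1 / (x - lam i))"
proof -
  obtain U where U: "unitary n U" and B: "eqn n B (mm n U (mm n (diagm lam) (qmat_H U)))"
    using herm_decomp[OF ev] by blast
  define R2 where "R2 = mm n U (mm n (diagm (\<lambda>i. 1 / (x - lam i))) (qmat_H U))"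
  have "eqn n (mm n R2 (Nm x B)) (mm n R2 (mm n U (mm n (diagm (\<lambda>i. x - lam i)) (qmat_H U))))"
    by (intro eqn_mmR Nm_decomp U B)
  also have "eqn n \<dots> (mm n U (mm n (diagm (\<lambda>i. 1 / (x - lam i) * (x - lam i))) (qmat_H U)))"
    unfolding R2_def by (rule diag_prod[OF U])
  also have "eqn n \<dots> (mm n U (mm n Idm (qmat_H U)))"
    by (intro eqn_mmR eqn_mmL) (use x in \<open>auto simp: eqn_def diagm_def Idm_def\<close>)
  also have "eqn n \<dots> (mm n U (qmat_H U))" by (intro eqn_mmR eqn_Idm_left)
  also have "eqn n \<dots> Idm" by (rule unitary_right[OF U])
  finally have R2N: "eqn n (mm n R2 (Nm x B)) Idm" .
  have "eqn n R R2" by (rule inverse_unique[OF R R2N])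
  then have "mtr n R = mtr n R2" by (rule mtr_cong)
  also have "\<dots> = (\<Sum>i<n. 1 / (x - lam i))" unfolding R2_def by (rule mtr_UDU[OF U])
  finally show ?thesis .
qed


definition cpoly :: "(nat \<Rightarrow> real) \<Rightarrow> nat \<Rightarrow> real poly" where
  "cpoly lam n = (\<Prod>i<n. [:- lam i, 1:])"

lemma poly_cpoly: "poly (cpoly lam n) x = (\<Prod>i<n. x - lam i)"
  by (simp add: cpoly_def poly_prod)

lemma cpoly_deg: "degree (cpoly lam n) = n" and cpoly_lc: "lead_coeff (cpoly lam n) = 1"
proof -
  show "degree (cpoly lam n) = n" unfolding cpoly_def
    by (subst degree_prod_sum_eq) auto
  show "lead_coeff (cpoly lam n) = 1" unfolding cpoly_def lead_coeff_prod by simp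
qed

lemma cpoly_logderiv:
  assumes x: "\<forall>i<n. x \<noteq> lam i"
  shows "poly (pderiv (cpoly lam n)) x = poly (cpoly lam n) x * (\<Sum>i<n. 1 / (x - lam i))"
proof -
  have "poly (pderiv (cpoly lam n)) x = (\<Sum>a<n. \<Prod>i\<in>{..<n} - {a}. x - lam i)"
    unfolding cpoly_def pderiv_prod by (simp add: poly_sum poly_prod pderiv_pCons)
  also have "\<dots> = (\<Sum>a<n. (\<Prod>i<n. x - lam i) * (1 / (x - lam a)))"
  proof (intro sum.cong refl)
    fix a assume a: "a \<in> {..<n}"
    have "(\<Prod>i<n. x - lam i) = (x - lam a) * (\<Prod>i\<in>{..<n} - {a}. x - lam i)"
      using a by (simp add: prod.remove)
    then show "(\<Prod>i\<in>{..<n} - {a}. x - lam i) = (\<Prod>i<n. x - lam i) * (1 / (x - lam a))"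
      using x a by simp
  qed
  finally show ?thesis by (simp add: poly_cpoly sum_distrib_left)
qed

lemma poly_eq_eventually:
  fixes p q :: "real poly"
  assumes "eventually (\<lambda>x. poly p x = poly q x) at_top"
  shows "p = q"
proof (rule ccontr)
  assume "p \<noteq> q"
  then have "p - q \<noteq> 0" by simp
  from poly_roots_finite[OF this] have fin: "finite {x. poly (p - q) x = 0}" .
  from assms obtain X where X: "\<And>x. x \<ge> X \<Longrightarrow> poly p x = poly q x"
    unfolding eventually_at_top_linorder by blast
  have "{X..} \<subseteq> {x. poly (p - q) x = 0}" using X by auto
  with fin have "finite {X..}" by (rule finite_subset[rotated])
  moreover have "infinite {X..X+1}" by (rule infinite_Icc) simp
  moreover have "{X..X+1} \<subseteq> {X..}" by auto
  ultimately show False using finite_subset by blast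
qed

lemma monic_logderiv_eq:
  fixes p q :: "real poly"
  assumes deg: "degree p = n" "degree q = n" and lc: "lead_coeff p = 1" "lead_coeff q = 1"
    and eq: "pderiv p * q = pderiv q * p"
  shows "p = q"
proof (rule ccontr)
  assume ne: "p \<noteq> q"
  define d where "d = p - q"
  have d0: "d \<noteq> 0" using ne by (simp add: d_def)
  have "n \<noteq> 0"
  proof
    assume "n = 0"
    then have "p = [:1:]" "q = [:1:]" using deg lc by (auto elim!: degree_eq_zeroE)
    then show False using ne by simp
  qed
  have cn: "coeff d n = 0" using deg lc by (simp add: d_def)
  have "degree d \<le> n" using deg by (simp add: d_def degree_diff_le)
  with cn d0 have kn: "degree d < n"
    by (metis le_neq_implies_less leading_coeff_0_iff)
  define k where "k = degree d"
  have deq: "pderiv d * q = pderiv q * d"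
    using eq by (simp add: d_def pderiv_diff algebra_simps)
  have dq: "degree (pderiv q) = n - 1" using deg by (simp add: degree_pderiv)
  have c1: "coeff (pderiv q * d) (n - 1 + k) = of_nat n * lead_coeff d"
  proof -
    have "coeff (pderiv q * d) (n - 1 + k) = coeff (pderiv q) (n - 1) * coeff d k"
      using coeff_mult_degree_sum[of "pderiv q" d] dq by (simp add: k_def)
    also have "coeff (pderiv q) (n - 1) = of_nat n"
      using \<open>n \<noteq> 0\<close> deg lc by (simp add: coeff_pderiv)
    finally show ?thesis by (simp add: k_def)
  qed
  have c2: "coeff (pderiv d * q) (n - 1 + k) = of_nat k * lead_coeff d"
  proof (cases "k = 0")
    case True
    then have "pderiv d = 0" by (simp add: k_def pderiv_eq_0_iff)
    then show ?thesis using True by simp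
  next
    case False
    have dd: "degree (pderiv d) = k - 1" by (simp add: degree_pderiv k_def)
    have "coeff (pderiv d * q) (k - 1 + n) = coeff (pderiv d) (k - 1) * coeff q n"
      using coeff_mult_degree_sum[of "pderiv d" q] dd deg by simp
    also have "coeff (pderiv d) (k - 1) = of_nat k * lead_coeff d"
      using False by (simp add: coeff_pderiv k_def)
    finally show ?thesis using False lc deg \<open>n \<noteq> 0\<close> by (simp add: add.commute)
  qed
  from c1 c2 deq have "of_nat n * lead_coeff d = of_nat k * lead_coeff d" by simp
  with d0 have "n = k" by simp
  with kn show False by (simp add: k_def)
qed

lemma cpoly_unique:
  assumes "eventually (\<lambda>x. (\<Sum>i<n. 1 / (x - lam i)) = (\<Sum>i<n. 1 / (x - mu i))) at_top"
  shows "cpoly lam n = cpoly mu n"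
proof (rule monic_logderiv_eq[OF cpoly_deg cpoly_deg cpoly_lc cpoly_lc])
  have ev: "eventually (\<lambda>x. (\<forall>i<n. x \<noteq> lam i) \<and> (\<forall>i<n. x \<noteq> mu i)) at_top"
  proof -
    have "eventually (\<lambda>x. \<forall>i\<in>{..<n}. x > lam i \<and> x > mu i) at_top"
      by (intro eventually_ball_finite) (auto intro: eventually_conj eventually_gt_at_top)
    then show ?thesis by eventually_elim auto
  qed
  show "pderiv (cpoly lam n) * cpoly mu n = pderiv (cpoly mu n) * cpoly lam n"
  proof (rule poly_eq_eventually)
    show "eventually (\<lambda>x. poly (pderiv (cpoly lam n) * cpoly mu n) x =
                          poly (pderiv (cpoly mu n) * cpoly lam n) x) at_top"
      using ev assms
    proof eventually_elim
      case (elim x)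
      then show ?case by (simp add: cpoly_logderiv)
    qed
  qed
qed

lemma cpoly_prod_eq:
  assumes "cpoly lam n = cpoly mu n" shows "(\<Prod>i<n. lam i) = (\<Prod>i<n. mu i)"
proof -
  have "poly (cpoly lam n) 0 = poly (cpoly mu n) 0" using assms by simp
  then have "(\<Prod>i<n. - lam i) = (\<Prod>i<n. - mu i)" by (simp add: poly_cpoly)
  then have "(-1)^n * (\<Prod>i<n. lam i) = (-1)^n * (\<Prod>i<n. mu i)"
    by (simp add: prod_uminus)
  then show ?thesis by simp
qed


lemma resolvent_exists:
  assumes ev: "herm_eigenvalues n B lam" and x: "\<forall>i<n. x \<noteq> lam i"
  shows "\<exists>R. eqn n (mm n (Nm x B) R) Idm"
proof -
  obtain U where U: "unitary n U" and B: "eqn n B (mm n U (mm n (diagm lam) (qmat_H U)))"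
    using herm_decomp[OF ev] by blast
  define R2 where "R2 = mm n U (mm n (diagm (\<lambda>i. 1 / (x - lam i))) (qmat_H U))"
  have "eqn n (mm n (Nm x B) R2) (mm n (mm n U (mm n (diagm (\<lambda>i. x - lam i)) (qmat_H U))) R2)"
    by (intro eqn_mmL Nm_decomp U B)
  also have "eqn n \<dots> (mm n U (mm n (diagm (\<lambda>i. (x - lam i) * (1 / (x - lam i)))) (qmat_H U)))"
    unfolding R2_def by (rule diag_prod[OF U])
  also have "eqn n \<dots> (mm n U (mm n Idm (qmat_H U)))"
    by (intro eqn_mmR eqn_mmL) (use x in \<open>auto simp: eqn_def diagm_def Idm_def\<close>)
  also have "eqn n \<dots> (mm n U (qmat_H U))" by (intro eqn_mmR eqn_Idm_left)
  also have "eqn n \<dots> Idm" by (rule unitary_right[OF U])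
  finally show ?thesis by blast
qed

lemma herm_prod_unique:
  assumes ev1: "herm_eigenvalues n B lam" and ev2: "herm_eigenvalues n B mu"
  shows "(\<Prod>i<n. lam i) = (\<Prod>i<n. mu i)"
proof -
  have "eventually (\<lambda>x. \<forall>i\<in>{..<n}. x > lam i \<and> x > mu i) at_top"
    by (intro eventually_ball_finite) (auto intro: eventually_conj eventually_gt_at_top)
  then have "eventually (\<lambda>x. (\<Sum>i<n. 1 / (x - lam i)) = (\<Sum>i<n. 1 / (x - mu i))) at_top"
  proof eventually_elim
    case (elim x)
    then have x1: "\<forall>i<n. x \<noteq> lam i" and x2: "\<forall>i<n. x \<noteq> mu i" by auto
    obtain R where R: "eqn n (mm n (Nm x B) R) Idm" using resolvent_exists[OF ev1 x1] by blast
    show ?case using trace_resolvent[OF ev1 x1 R] trace_resolvent[OF ev2 x2 R] by simp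
  qed
  then show ?thesis by (intro cpoly_prod_eq cpoly_unique)
qed

lemma herm_det_eq:
  assumes "herm_eigenvalues n B lam"
  shows "herm_det n B = (\<Prod>i<n. lam i)"
  unfolding herm_det_def
proof (rule the_equality)
  show "\<exists>lama. herm_eigenvalues n B lama \<and> (\<Prod>i<n. lam i) = (\<Prod>i<n. lama i)"
    using assms by blast
  fix d assume "\<exists>lama. herm_eigenvalues n B lama \<and> d = (\<Prod>i<n. lama i)"
  then show "d = (\<Prod>i<n. lam i)" using herm_prod_unique[OF assms] by auto
qed

lemma herm_eigenvalues_cong:
  assumes "eqn n B B'"
  shows "herm_eigenvalues n B lam = herm_eigenvalues n B' lam"
proof -
  have h: "hermitian n B = hermitian n B'"
    using assms unfolding hermitian_def eqn_def qmat_H_def by auto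
  have "\<And>U. eqn n (mm n (qmat_H U) (mm n B U)) (mm n (qmat_H U) (mm n B' U))"
    by (intro eqn_mmR eqn_mmL assms)
  then have "\<And>U. \<forall>i<n. \<forall>j<n. mm n (qmat_H U) (mm n B U) i j = mm n (qmat_H U) (mm n B' U) i j"
    unfolding eqn_def by blast
  then show ?thesis unfolding herm_eigenvalues_def h by simp
qed

lemma herm_det_cong:
  assumes "eqn n B B'"
  shows "herm_det n B = herm_det n B'"
  unfolding herm_det_def herm_eigenvalues_cong[OF assms] ..


definition sk :: "nat \<Rightarrow> nat \<Rightarrow> nat" where "sk k a = (if a < k then a else Suc a)"
definition si :: "nat \<Rightarrow> nat \<Rightarrow> nat" where "si k p = (if p < k then p else p - 1)"

lemma sk_neq [simp]: "sk k a \<noteq> k" by (simp add: sk_def)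
lemma sk_neq' [simp]: "k \<noteq> sk k a" by (simp add: sk_def)
lemma si_sk [simp]: "si k (sk k a) = a" by (simp add: sk_def si_def)
lemma sk_si: "p \<noteq> k \<Longrightarrow> sk k (si k p) = p" by (auto simp: sk_def si_def)
lemma sk_inj [simp]: "sk k a = sk k b \<longleftrightarrow> a = b" by (simp add: sk_def)
lemma sk_less: "k < m \<Longrightarrow> a < m - 1 \<Longrightarrow> sk k a < m" by (auto simp: sk_def)
lemma si_less: "p < m \<Longrightarrow> p \<noteq> k \<Longrightarrow> k < m \<Longrightarrow> si k p < m - 1" by (auto simp: si_def)
lemma sk_mono: "a < b \<Longrightarrow> sk k a < sk k b" by (simp add: sk_def)

lemma sk_bij: "k < m \<Longrightarrow> bij_betw (sk k) {..<m - 1} ({..<m} - {k})"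
  unfolding bij_betw_def
proof
  show "inj_on (sk k) {..<m - 1}" by (auto simp: inj_on_def)
  assume k: "k < m"
  show "sk k ` {..<m - 1} = {..<m} - {k}"
  proof
    show "sk k ` {..<m - 1} \<subseteq> {..<m} - {k}" using k by (auto simp: sk_less)
    show "{..<m} - {k} \<subseteq> sk k ` {..<m - 1}"
    proof
      fix p assume "p \<in> {..<m} - {k}"
      then have "p = sk k (si k p)" "si k p < m - 1" using k sk_si si_less by auto
      then show "p \<in> sk k ` {..<m - 1}" by blast
    qed
  qed
qed

lemma sum_split_k:
  assumes k: "k < m"
  shows "(\<Sum>q<m. g q) = g k + (\<Sum>a<m - 1. g (sk k a))"
proof -
  have "(\<Sum>q<m. g q) = g k + (\<Sum>q\<in>{..<m} - {k}. g q)" using k by (simp add: sum.remove)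
  also have "(\<Sum>q\<in>{..<m} - {k}. g q) = (\<Sum>a<m - 1. g (sk k a))"
    using sum.reindex_bij_betw[OF sk_bij[OF k], of g] by simp
  finally show ?thesis .
qed

lemma idx_cases:
  assumes "p < m" "k < m"
  obtains "p = k" | a where "a < m - 1" "p = sk k a"
  using assms sk_si si_less by metis

lemma sum_delta_a: "(a0::nat) < n \<Longrightarrow> (\<Sum>a<n. if a0 = a then f a else 0) = f a0"
  by simp
lemma sum_delta_a': "(a0::nat) < n \<Longrightarrow> (\<Sum>a<n. if a = a0 then f a else 0) = f a0"
  by simp

lemma qreal_left: "x * qreal r = qreal r * x"
  by (simp add: qreal_comm)
lemma qreal_left2: "x * (qreal r * y) = qreal r * (x * y)"
  by (metis mult.assoc qreal_comm)
lemma qreal_qreal: "qreal a * (qreal b * y) = qreal (a * b) * y"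
  by (simp add: qreal_mult mult.assoc)
lemma qreal_neg: "- qreal a = qreal (- a)"
  by (simp add: quat_eq_iff)
lemma qreal_neg_mult: "- (qreal a * y) = qreal (- a) * y"
  by (simp add: quat_eq_iff)

lemma qr_simps:
  "qreal a * qreal b = qreal (a * b)"
  "qreal a + qreal b = qreal (a + b)"
  "qreal a - qreal b = qreal (a - b)"
  "- qreal a = qreal (- a)"
  "qreal a * (qreal b * y) = qreal (a * b) * y"
  "qreal a * y + qreal b * y = qreal (a + b) * y"
  "qreal a * y - qreal b * y = qreal (a - b) * y"
  "- (qreal a * y) = qreal (- a) * y"
  by (simp_all add: quat_eq_iff algebra_simps)


definition Rarr :: "nat \<Rightarrow> (nat \<Rightarrow> real) \<Rightarrow> (nat \<Rightarrow> quat) \<Rightarrow> real \<Rightarrow> real \<Rightarrow> qmat" where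
  "Rarr k mu c x sg p q =
    (if p = k then (if q = k then qreal (1 / sg) else qreal (1 / ((x - mu (si k q)) * sg)) * qcnj (c (si k q)))
     else if q = k then qreal (1 / ((x - mu (si k p)) * sg)) * c (si k p)
     else (if p = q then qreal (1 / (x - mu (si k p))) else 0)
          + qreal (1 / ((x - mu (si k p)) * (x - mu (si k q)) * sg)) * (c (si k p) * qcnj (c (si k q))))"

lemma Rarr_simps:
  "Rarr k mu c x sg k k = qreal (1 / sg)"
  "Rarr k mu c x sg k (sk k b) = qreal (1 / ((x - mu b) * sg)) * qcnj (c b)"
  "Rarr k mu c x sg (sk k a) k = qreal (1 / ((x - mu a) * sg)) * c a"
  "Rarr k mu c x sg (sk k a) (sk k b) = (if a = b then qreal (1 / (x - mu a)) else 0)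
          + qreal (1 / ((x - mu a) * (x - mu b) * sg)) * (c a * qcnj (c b))"
  by (simp_all add: Rarr_def)

lemma qcnj_qreal_self: "qcnj c * (qreal t * c) = qreal (t * nsq c)"
  by (simp add: qreal_left2 qcnj_mult_self qreal_mult)

lemma qcnj_qreal_self2: "qcnj c * (qreal t * (c * d)) = qreal (t * nsq c) * d"
proof -
  have "qcnj c * (qreal t * (c * d)) = qreal t * (qcnj c * (c * d))" by (rule qreal_left2)
  also have "\<dots> = qreal t * ((qcnj c * c) * d)" by (simp add: mult.assoc)
  also have "\<dots> = qreal (t * nsq c) * d" by (simp only: qcnj_mult_self qr_simps)
  finally show ?thesis .
qed
lemma qcnj_times_qreal: "qcnj c * qreal u = qreal u * qcnj c"
  by (rule qreal_comm[symmetric])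
lemma neg_times_qreal: "(- c) * qreal u = qreal (- u) * c"
  by (simp add: quat_eq_iff)
lemma neg_times_qreal2: "- (c * qreal u) = qreal (- u) * c"
  by (simp add: quat_eq_iff)

lemma arrow_inv:
  fixes A' :: qmat
  assumes k: "k < m"
    and h1: "\<forall>a<m - 1. \<forall>b<m - 1. A' (sk k a) (sk k b) = (if a = b then qreal (mu a) else 0)"
    and h2: "A' k k = qreal al"
    and h3: "\<forall>a<m - 1. A' (sk k a) k = c a"
    and h4: "\<forall>b<m - 1. A' k (sk k b) = qcnj (c b)"
    and hx: "\<forall>a<m - 1. x \<noteq> mu a"
    and sg: "sg = x - al - (\<Sum>a<m - 1. nsq (c a) / (x - mu a))" "sg \<noteq> 0"
  shows "eqn m (mm m (Nm x A') (Rarr k mu c x sg)) Idm"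
proof -
  define R where "R = Rarr k mu c x sg"
  define N where "N = Nm x A'"
  define S where "S = (\<Sum>a<m - 1. nsq (c a) / (x - mu a))"
  have Nkk: "N k k = qreal (x - al)" using h2 by (simp add: N_def Nm_def qreal_diff)
  have Nkb: "\<And>b. b < m - 1 \<Longrightarrow> N k (sk k b) = - qcnj (c b)" using h4 by (simp add: N_def Nm_def)
  have Nak: "\<And>a. a < m - 1 \<Longrightarrow> N (sk k a) k = - c a" using h3 by (simp add: N_def Nm_def)
  have Nab: "\<And>a b. a < m - 1 \<Longrightarrow> b < m - 1 \<Longrightarrow> N (sk k a) (sk k b) = (if a = b then qreal (x - mu a) else 0)"
    using h1 by (simp add: N_def Nm_def qreal_diff)
  have split: "\<And>p q. mm m N R p q = N p k * R k q + (\<Sum>a<m - 1. N p (sk k a) * R (sk k a) q)"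
    unfolding qmat_mult_def by (rule sum_split_k[OF k])
  have xa: "\<And>a. a < m - 1 \<Longrightarrow> x - mu a \<noteq> 0" using hx by auto
  have Sg: "sg = x - al - S" using sg by (simp add: S_def)
  have ckk: "mm m N R k k = 1"
  proof -
    have "(\<Sum>a<m - 1. N k (sk k a) * R (sk k a) k) = (\<Sum>a<m - 1. qreal (- (nsq (c a) / (x - mu a) / sg)))"
    proof (intro sum.cong refl)
      fix a assume a: "a \<in> {..<m - 1}"
      have "N k (sk k a) * R (sk k a) k = - (qcnj (c a) * (qreal (1 / ((x - mu a) * sg)) * c a))"
        using a by (simp add: Nkb R_def Rarr_simps)
      also have "\<dots> = qreal (- (nsq (c a) / (x - mu a) / sg))"
        by (simp add: qcnj_qreal_self qreal_neg)
      finally show "N k (sk k a) * R (sk k a) k = qreal (- (nsq (c a) / (x - mu a) / sg))" .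
    qed
    also have "\<dots> = qreal (- (S / sg))"
      by (simp add: qreal_sum[symmetric] S_def sum_negf sum_divide_distrib)
    finally have "mm m N R k k = qreal ((x - al) * (1 / sg) + - (S / sg))"
      using split[of k k] by (simp add: Nkk R_def Rarr_simps qr_simps)
    also have "(x - al) * (1 / sg) + - (S / sg) = (x - al - S) / sg" by (simp add: diff_divide_distrib)
    also have "\<dots> = 1" using Sg sg(2) by simp
    finally show ?thesis by simp
  qed
  have ckb: "mm m N R k (sk k b0) = 0" if b0: "b0 < m - 1" for b0
  proof -
    define D where "D = (x - mu b0) * sg"
    have "(\<Sum>a<m - 1. N k (sk k a) * R (sk k a) (sk k b0))
        = (\<Sum>a<m - 1. qreal ((if a = b0 then - 1 / (x - mu b0) else 0) - nsq (c a) / (x - mu a) / D) * qcnj (c b0))"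
    proof (intro sum.cong refl)
      fix a assume a: "a \<in> {..<m - 1}"
      have "N k (sk k a) * R (sk k a) (sk k b0) = - (qcnj (c a) * ((if a = b0 then qreal (1 / (x - mu a)) else 0)
          + qreal (1 / ((x - mu a) * (x - mu b0) * sg)) * (c a * qcnj (c b0))))"
        using a b0 by (simp add: Nkb R_def Rarr_simps)
      also have "\<dots> = qreal ((if a = b0 then - 1 / (x - mu b0) else 0) - nsq (c a) / (x - mu a) / D) * qcnj (c b0)"
        by (cases "a = b0") (simp_all add: D_def distrib_left qcnj_qreal_self2 qcnj_times_qreal qr_simps
            algebra_simps)
      finally show "N k (sk k a) * R (sk k a) (sk k b0) =
          qreal ((if a = b0 then - 1 / (x - mu b0) else 0) - nsq (c a) / (x - mu a) / D) * qcnj (c b0)" .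
    qed
    also have "\<dots> = qreal (- 1 / (x - mu b0) - S / D) * qcnj (c b0)"
      unfolding sum_distrib_right[symmetric] qreal_sum[symmetric] sum_subtractf
      using b0 by (simp add: S_def sum_divide_distrib)
    finally have "mm m N R k (sk k b0) = qreal ((x - al) * (1 / D) + (- 1 / (x - mu b0) - S / D)) * qcnj (c b0)"
      using split[of k "sk k b0"] by (simp add: Nkk R_def Rarr_simps qr_simps D_def)
    also have "(x - al) * (1 / D) + (- 1 / (x - mu b0) - S / D) = 0"
    proof -
      have "1 / (x - mu b0) = sg / D" using sg(2) by (simp add: D_def)
      then have "(x - al) * (1 / D) + (- 1 / (x - mu b0) - S / D) = (x - al - S - sg) / D"
        by (simp add: diff_divide_distrib)
      also have "\<dots> = 0" using Sg by simp
      finally show ?thesis .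
    qed
    finally show ?thesis by simp
  qed
  have cak: "mm m N R (sk k a0) k = 0" if a0: "a0 < m - 1" for a0
  proof -
    have "(\<Sum>a<m - 1. N (sk k a0) (sk k a) * R (sk k a) k)
        = (\<Sum>a<m - 1. if a0 = a then qreal ((x - mu a0) * (1 / ((x - mu a0) * sg))) * c a0 else 0)"
      by (intro sum.cong refl) (use a0 in \<open>auto simp: Nab R_def Rarr_simps qr_simps\<close>)
    also have "\<dots> = qreal ((x - mu a0) * (1 / ((x - mu a0) * sg))) * c a0" using a0 by simp
    finally have "mm m N R (sk k a0) k = qreal (- (1 / sg) + (x - mu a0) * (1 / ((x - mu a0) * sg))) * c a0"
      using split[of "sk k a0" k] a0 xa[OF a0] by (simp add: Nak R_def Rarr_simps qr_simps neg_times_qreal neg_times_qreal2)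
    also have "- (1 / sg) + (x - mu a0) * (1 / ((x - mu a0) * sg)) = 0"
      using xa[OF a0] sg(2) by (simp add: field_simps)
    finally show ?thesis by simp
  qed
  have cab: "mm m N R (sk k a0) (sk k b0) = (if a0 = b0 then 1 else 0)" if a0: "a0 < m - 1" and b0: "b0 < m - 1" for a0 b0
  proof -
    define D where "D = (x - mu b0) * sg"
    have "(\<Sum>a<m - 1. N (sk k a0) (sk k a) * R (sk k a) (sk k b0))
        = (\<Sum>a<m - 1. if a0 = a then qreal (x - mu a0) * R (sk k a0) (sk k b0) else 0)"
      by (intro sum.cong refl) (use a0 in \<open>auto simp: Nab\<close>)
    also have "\<dots> = qreal (x - mu a0) * R (sk k a0) (sk k b0)" using a0 by simp
    also have "\<dots> = (if a0 = b0 then 1 else 0) + qreal ((x - mu a0) * (1 / ((x - mu a0) * (x - mu b0) * sg))) * (c a0 * qcnj (c b0))"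
      using xa[OF a0] by (auto simp: R_def Rarr_simps distrib_left qr_simps)
    finally have sm: "(\<Sum>a<m - 1. N (sk k a0) (sk k a) * R (sk k a) (sk k b0)) = (if a0 = b0 then 1 else 0) + qreal ((x - mu a0) * (1 / ((x - mu a0) * (x - mu b0) * sg))) * (c a0 * qcnj (c b0))" .
    have t1: "N (sk k a0) k * R k (sk k b0) = qreal (- (1 / ((x - mu b0) * sg))) * (c a0 * qcnj (c b0))"
      using a0 b0 by (simp add: Nak R_def Rarr_simps qreal_left2 qr_simps)
    have comb: "\<And>a b y z. qreal a * y + (z + qreal b * y) = z + qreal (a + b) * y"
      by (simp add: quat_eq_iff algebra_simps)
    have "mm m N R (sk k a0) (sk k b0) = (if a0 = b0 then 1 else 0) +
       qreal (- (1 / ((x - mu b0) * sg)) + (x - mu a0) * (1 / ((x - mu a0) * (x - mu b0) * sg))) * (c a0 * qcnj (c b0))"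
      unfolding split[of "sk k a0" "sk k b0"] t1 sm comb ..
    also have "- (1 / ((x - mu b0) * sg)) + (x - mu a0) * (1 / ((x - mu a0) * (x - mu b0) * sg)) = 0"
      using xa[OF a0] by (simp add: mult.assoc)
    finally show ?thesis by simp
  qed
  show ?thesis unfolding eqn_def R_def[symmetric] N_def[symmetric]
  proof (intro allI impI)
    fix p q assume p: "p < m" and q: "q < m"
    show "mm m N R p q = Idm p q"
    proof (cases rule: idx_cases[OF p k])
      case 1
      then show ?thesis
      proof (cases rule: idx_cases[OF q k])
        case 1 then show ?thesis using \<open>p = k\<close> ckk by (simp add: Idm_def)
      next
        case (2 b) then show ?thesis using \<open>p = k\<close> ckb by (simp add: Idm_def)
      qed
    next
      case (2 a)
      then show ?thesis
      proof (cases rule: idx_cases[OF q k])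
        case 1 then show ?thesis using 2 cak by (simp add: Idm_def)
      next
        case (2 b) then show ?thesis using \<open>p = sk k a\<close> \<open>a < m - 1\<close> cab by (simp add: Idm_def)
      qed
    qed
  qed
qed

lemma mtr_Rarr:
  assumes k: "k < m"
  shows "mtr m (Rarr k mu c x sg) = 1 / sg + (\<Sum>a<m - 1. 1 / (x - mu a) + nsq (c a) / ((x - mu a) * (x - mu a) * sg))"
  unfolding mtr_def sum_split_k[OF k]
  by (simp add: Rarr_simps mult_qcnj qr_simps)


definition Wk :: "nat \<Rightarrow> qmat \<Rightarrow> qmat" where
  "Wk k V p q = (if p = k then (if q = k then 1 else 0) else if q = k then 0 else V (si k p) (si k q))"

lemma Wk_simps [simp]:
  "Wk k V k k = 1" "Wk k V k (sk k b) = 0" "Wk k V (sk k a) k = 0"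
  "Wk k V (sk k a) (sk k b) = V a b"
  by (simp_all add: Wk_def)

lemma Wk_row_k: "q \<noteq> k \<Longrightarrow> Wk k V k q = 0" by (simp add: Wk_def)

lemma Wk_unitary:
  assumes k: "k < m" and V: "unitary (m - 1) V"
  shows "unitary m (Wk k V)"
  unfolding unitary_def
proof (intro allI impI)
  fix p q assume p: "p < m" and q: "q < m"
  have e: "\<And>p q. mm m (qmat_H (Wk k V)) (Wk k V) p q =
      qcnj (Wk k V k p) * Wk k V k q + (\<Sum>a<m - 1. qcnj (Wk k V (sk k a) p) * Wk k V (sk k a) q)"
    unfolding qmat_mult_def qmat_H_def by (rule sum_split_k[OF k])
  show "mm m (qmat_H (Wk k V)) (Wk k V) p q = (if p = q then 1 else 0)"
  proof (cases rule: idx_cases[OF p k])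
    case 1
    then show ?thesis
      by (cases rule: idx_cases[OF q k]) (auto simp: e)
  next
    case (2 a)
    then show ?thesis
    proof (cases rule: idx_cases[OF q k])
      case 1 then show ?thesis using 2 by (auto simp: e)
    next
      case (2 b)
      have "mm m (qmat_H (Wk k V)) (Wk k V) p q = mm (m - 1) (qmat_H V) V a b"
        using 2 \<open>p = sk k a\<close> unfolding e by (simp add: qmat_mult_def qmat_H_def)
      also have "\<dots> = (if a = b then 1 else 0)"
        using V \<open>a < m - 1\<close> 2 unfolding unitary_def by auto
      finally show ?thesis using 2 \<open>p = sk k a\<close> by simp
    qed
  qed
qed

lemma herm_entry: "hermitian m A \<Longrightarrow> p < m \<Longrightarrow> q < m \<Longrightarrow> qcnj (A p q) = A q p"
  unfolding hermitian_def qmat_H_def by auto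

lemma herm_diag: "hermitian m A \<Longrightarrow> p < m \<Longrightarrow> A p p = qreal (quat.Re (A p p))"
  using herm_entry[of m A p p] by (simp add: quat_eq_iff)

lemma Wk_conj:
  assumes k: "k < m" and hA: "hermitian m A"
    and D: "eqn (m - 1) (mm (m - 1) (qmat_H V) (mm (m - 1) (\<lambda>a b. A (sk k a) (sk k b)) V)) (diagm mu)"
  defines "A' \<equiv> mm m (qmat_H (Wk k V)) (mm m A (Wk k V))"
    and "cv \<equiv> (\<lambda>a. \<Sum>a'<m - 1. qcnj (V a' a) * A (sk k a') k)"
  shows "\<forall>a<m - 1. \<forall>b<m - 1. A' (sk k a) (sk k b) = (if a = b then qreal (mu a) else 0)"
    and "A' k k = qreal (quat.Re (A k k))"
    and "\<forall>a<m - 1. A' (sk k a) k = cv a"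
    and "\<forall>b<m - 1. A' k (sk k b) = qcnj (cv b)"
proof -
  define W where "W = Wk k V"
  have AW: "\<And>r q. mm m A W r q = A r k * W k q + (\<Sum>b<m - 1. A r (sk k b) * W (sk k b) q)"
    unfolding qmat_mult_def by (rule sum_split_k[OF k])
  have AWk: "\<And>r. mm m A W r k = A r k" unfolding AW by (simp add: W_def)
  have AWb: "\<And>r b. mm m A W r (sk k b) = (\<Sum>b'<m - 1. A r (sk k b') * V b' b)" unfolding AW by (simp add: W_def)
  have A'e: "\<And>p q. A' p q = qcnj (W k p) * mm m A W k q + (\<Sum>a<m - 1. qcnj (W (sk k a) p) * mm m A W (sk k a) q)"
    unfolding A'_def W_def[symmetric] qmat_H_def qmat_mult_def[of m "\<lambda>i j. qcnj (W j i)"] by (rule sum_split_k[OF k])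
  have A'k: "\<And>q. A' k q = mm m A W k q" unfolding A'e by (simp add: W_def)
  have A'a: "\<And>a q. A' (sk k a) q = (\<Sum>a'<m - 1. qcnj (V a' a) * mm m A W (sk k a') q)" unfolding A'e by (simp add: W_def)
  show "\<forall>a<m - 1. \<forall>b<m - 1. A' (sk k a) (sk k b) = (if a = b then qreal (mu a) else 0)"
  proof (intro allI impI)
    fix a b assume a: "a < m - 1" and b: "b < m - 1"
    have "A' (sk k a) (sk k b) = mm (m - 1) (qmat_H V) (mm (m - 1) (\<lambda>a b. A (sk k a) (sk k b)) V) a b"
      unfolding A'a AWb by (simp add: qmat_mult_def qmat_H_def)
    also have "\<dots> = (if a = b then qreal (mu a) else 0)" using D a b by (simp add: eqn_def diagm_def)
    finally show "A' (sk k a) (sk k b) = (if a = b then qreal (mu a) else 0)" .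
  qed
  show "A' k k = qreal (quat.Re (A k k))" unfolding A'k AWk using herm_diag[OF hA k] .
  show "\<forall>a<m - 1. A' (sk k a) k = cv a" unfolding A'a AWk cv_def by simp
  show "\<forall>b<m - 1. A' k (sk k b) = qcnj (cv b)"
  proof (intro allI impI)
    fix b assume b: "b < m - 1"
    have "qcnj (cv b) = (\<Sum>a'<m - 1. A k (sk k a') * V a' b)"
      unfolding cv_def qcnj_sum qcnj_mult
      by (intro sum.cong refl) (simp add: herm_entry[OF hA] sk_less[OF k] k)
    then show "A' k (sk k b) = qcnj (cv b)" unfolding A'k AWb by simp
  qed
qed

lemma mm_sId_left: "i < n \<Longrightarrow> mm n (\<lambda>i j. if i = j then qreal x else 0) X i j = qreal x * X i j"
proof -
  assume i: "i < n"
  have "mm n (\<lambda>i j. if i = j then qreal x else 0) X i j = (\<Sum>k<n. if k = i then qreal x * X k j else 0)"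
    unfolding qmat_mult_def by (rule sum.cong) auto
  then show ?thesis using i by simp
qed
lemma mm_sId_right: "j < n \<Longrightarrow> mm n X (\<lambda>i j. if i = j then qreal x else 0) i j = qreal x * X i j"
proof -
  assume j: "j < n"
  have "mm n X (\<lambda>i j. if i = j then qreal x else 0) i j = (\<Sum>k<n. if k = j then X i k * qreal x else 0)"
    unfolding qmat_mult_def by (rule sum.cong) auto
  then show ?thesis using j by (simp add: qreal_comm)
qed

lemma sim_inv:
  assumes W: "unitary m W"
    and R': "eqn m (mm m (Nm x (mm m (qmat_H W) (mm m A W))) R') Idm"
  shows "eqn m (mm m (Nm x A) (mm m W (mm m R' (qmat_H W)))) Idm"
proof -
  define A' where "A' = mm m (qmat_H W) (mm m A W)"
  have 1: "eqn m (mm m W A') (mm m A W)"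
  proof -
    have "mm m W A' = mm m (mm m W (qmat_H W)) (mm m A W)" unfolding A'_def by (simp add: mm_assoc)
    also have "eqn m \<dots> (mm m Idm (mm m A W))" by (intro eqn_mmL unitary_right W)
    also have "eqn m \<dots> (mm m A W)" by (rule eqn_Idm_left)
    finally show ?thesis .
  qed
  have 2: "eqn m (mm m (Nm x A) W) (mm m W (Nm x A'))"
    unfolding eqn_def
  proof (intro allI impI)
    fix i j assume i: "i < m" and j: "j < m"
    have "mm m (Nm x A) W i j = qreal x * W i j - mm m A W i j"
      unfolding Nm_def mm_diff_left using i by (simp add: mm_sId_left)
    also have "\<dots> = qreal x * W i j - mm m W A' i j" using 1 i j by (simp add: eqn_def)
    also have "\<dots> = mm m W (Nm x A') i j"
      unfolding Nm_def mm_diff_right using j by (simp add: mm_sId_right)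
    finally show "mm m (Nm x A) W i j = mm m W (Nm x A') i j" .
  qed
  have "mm m (Nm x A) (mm m W (mm m R' (qmat_H W))) = mm m (mm m (Nm x A) W) (mm m R' (qmat_H W))"
    by (simp add: mm_assoc)
  also have "eqn m \<dots> (mm m (mm m W (Nm x A')) (mm m R' (qmat_H W)))" by (intro eqn_mmL 2)
  also have "\<dots> = mm m W (mm m (mm m (Nm x A') R') (qmat_H W))" by (simp add: mm_assoc)
  also have "eqn m \<dots> (mm m W (mm m Idm (qmat_H W)))" by (intro eqn_mmR eqn_mmL R'[folded A'_def])
  also have "eqn m \<dots> (mm m W (qmat_H W))" by (intro eqn_mmR eqn_Idm_left)
  also have "eqn m \<dots> Idm" by (rule unitary_right[OF W])
  finally show ?thesis .
qed

lemma sim_trace: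
  assumes W: "unitary m W"
  shows "mtr m (mm m W (mm m R' (qmat_H W))) = mtr m R'"
proof -
  have "mtr m (mm m W (mm m R' (qmat_H W))) = mtr m (mm m (mm m R' (qmat_H W)) W)" by (rule mtr_comm)
  also have "\<dots> = mtr m (mm m R' (mm m (qmat_H W) W))" by (simp add: mm_assoc)
  also have "\<dots> = mtr m (mm m R' Idm)" by (intro mtr_cong eqn_mmR unitary_left W)
  also have "\<dots> = mtr m R'" by (intro mtr_cong eqn_Idm_right)
  finally show ?thesis .
qed

lemma Wk_kk:
  assumes k: "k < m"
  shows "mm m (Wk k V) (mm m R' (qmat_H (Wk k V))) k k = R' k k"
proof -
  have "mm m (Wk k V) X k k = X k k" for X
    unfolding qmat_mult_def sum_split_k[OF k] by simp
  moreover have "mm m R' (qmat_H (Wk k V)) k k = R' k k"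
    unfolding qmat_mult_def sum_split_k[OF k] by (simp add: qmat_H_def)
  ultimately show ?thesis by simp
qed


definition fpoly :: "real \<Rightarrow> (nat \<Rightarrow> real) \<Rightarrow> (nat \<Rightarrow> real) \<Rightarrow> nat \<Rightarrow> real poly" where
  "fpoly al w mu n = [:- al, 1:] * cpoly mu n - (\<Sum>a<n. Polynomial.smult (w a) (\<Prod>b\<in>{..<n} - {a}. [:- mu b, 1:]))"

definition sgf :: "real \<Rightarrow> (nat \<Rightarrow> real) \<Rightarrow> (nat \<Rightarrow> real) \<Rightarrow> nat \<Rightarrow> real \<Rightarrow> real" where
  "sgf al w mu n x = x - al - (\<Sum>a<n. w a / (x - mu a))"

lemma fpoly_poly:
  assumes x: "\<forall>a<n. x \<noteq> mu a"
  shows "poly (fpoly al w mu n) x = sgf al w mu n x * poly (cpoly mu n) x"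
proof -
  have "\<And>a. a < n \<Longrightarrow> (\<Prod>b\<in>{..<n} - {a}. x - mu b) = poly (cpoly mu n) x / (x - mu a)"
  proof -
    fix a assume a: "a < n"
    have "(\<Prod>b<n. x - mu b) = (x - mu a) * (\<Prod>b\<in>{..<n} - {a}. x - mu b)"
      using a by (simp add: prod.remove)
    then show "(\<Prod>b\<in>{..<n} - {a}. x - mu b) = poly (cpoly mu n) x / (x - mu a)"
      using x a by (simp add: poly_cpoly)
  qed
  then have "poly (fpoly al w mu n) x = (x - al) * poly (cpoly mu n) x - (\<Sum>a<n. w a * (poly (cpoly mu n) x / (x - mu a)))"
    unfolding fpoly_def by (simp add: poly_sum poly_prod algebra_simps)
  also have "\<dots> = sgf al w mu n x * poly (cpoly mu n) x"
    unfolding sgf_def by (simp add: algebra_simps sum_distrib_left)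
  finally show ?thesis .
qed

lemma fpoly_deg:
  "degree (fpoly al w mu n) = Suc n \<and> lead_coeff (fpoly al w mu n) = 1"
proof -
  define g where "g = [:- al, 1:] * cpoly mu n"
  define h where "h = (\<Sum>a<n. Polynomial.smult (w a) (\<Prod>b\<in>{..<n} - {a}. [:- mu b, 1:]))"
  have dg: "degree g = Suc n" unfolding g_def
    by (subst degree_mult_eq) (use cpoly_deg[of mu n] cpoly_lc[of mu n] in auto)
  have lg: "lead_coeff g = 1" unfolding g_def lead_coeff_mult using cpoly_lc[of mu n] by simp
  have dh: "degree h < Suc n"
  proof -
    have "degree h \<le> n - 1" unfolding h_def
    proof (rule degree_sum_le)
      fix a assume a: "a \<in> {..<n}"
      have "degree (Polynomial.smult (w a) (\<Prod>b\<in>{..<n} - {a}. [:- mu b, 1:])) \<le> degree (\<Prod>b\<in>{..<n} - {a}. [:- mu b, 1:])"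
        by (rule degree_smult_le)
      also have "\<dots> = card ({..<n} - {a})" by (subst degree_prod_sum_eq) auto
      also have "\<dots> = n - 1" using a by simp
      finally show "degree (Polynomial.smult (w a) (\<Prod>b\<in>{..<n} - {a}. [:- mu b, 1:])) \<le> n - 1" .
    qed simp
    then show ?thesis by simp
  qed
  have "fpoly al w mu n = g + (- h)" unfolding fpoly_def g_def h_def by simp
  moreover have "degree (g + (- h)) = Suc n" using dg dh by (subst degree_add_eq_left) auto
  moreover have "coeff (g + (- h)) (Suc n) = 1" using lg dg dh by (simp add: coeff_eq_0)
  ultimately show ?thesis by simp
qed

lemma sgf_deriv:
  assumes x: "\<forall>a<n. x \<noteq> mu a"
  shows "DERIV (sgf al w mu n) x :> 1 + (\<Sum>a<n. w a / ((x - mu a) * (x - mu a)))"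
  unfolding sgf_def[abs_def]
  by (rule derivative_eq_intros refl | use x in force)+ (simp add: sum_negf[symmetric])

lemma fpoly_deriv:
  assumes x: "\<forall>a<n. x \<noteq> mu a"
  shows "poly (pderiv (fpoly al w mu n)) x =
     (1 + (\<Sum>a<n. w a / ((x - mu a) * (x - mu a)))) * poly (cpoly mu n) x
     + sgf al w mu n x * (poly (cpoly mu n) x * (\<Sum>a<n. 1 / (x - mu a)))"
proof -
  define S where "S = - (mu ` {..<n})"
  have oS: "open S" unfolding S_def by (intro open_Compl finite_imp_closed) auto
  have xS: "x \<in> S" using x unfolding S_def by auto
  have d1: "DERIV (\<lambda>y. sgf al w mu n y * poly (cpoly mu n) y) x :>
      (1 + (\<Sum>a<n. w a / ((x - mu a) * (x - mu a)))) * poly (cpoly mu n) x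
       + poly (pderiv (cpoly mu n)) x * sgf al w mu n x"
    by (intro DERIV_mult sgf_deriv x poly_DERIV)
  have d2: "DERIV (poly (fpoly al w mu n)) x :>
      (1 + (\<Sum>a<n. w a / ((x - mu a) * (x - mu a)))) * poly (cpoly mu n) x
       + poly (pderiv (cpoly mu n)) x * sgf al w mu n x"
    by (rule has_field_derivative_transform_within_open[OF d1 oS xS])
       (subst fpoly_poly, auto simp: S_def)
  have "poly (pderiv (fpoly al w mu n)) x = (1 + (\<Sum>a<n. w a / ((x - mu a) * (x - mu a)))) * poly (cpoly mu n) x
       + poly (pderiv (cpoly mu n)) x * sgf al w mu n x"
    using DERIV_unique[OF poly_DERIV d2] .
  then show ?thesis using cpoly_logderiv[OF x] by simp
qed


lemma left_inv_exists:
  assumes ev: "herm_eigenvalues n B lam" and x: "\<forall>i<n. x \<noteq> lam i"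
  shows "\<exists>L. eqn n (mm n L (Nm x B)) Idm"
proof -
  obtain U where U: "unitary n U" and B: "eqn n B (mm n U (mm n (diagm lam) (qmat_H U)))"
    using herm_decomp[OF ev] by blast
  define R2 where "R2 = mm n U (mm n (diagm (\<lambda>i. 1 / (x - lam i))) (qmat_H U))"
  have "eqn n (mm n R2 (Nm x B)) (mm n R2 (mm n U (mm n (diagm (\<lambda>i. x - lam i)) (qmat_H U))))"
    by (intro eqn_mmR Nm_decomp U B)
  also have "eqn n \<dots> (mm n U (mm n (diagm (\<lambda>i. 1 / (x - lam i) * (x - lam i))) (qmat_H U)))"
    unfolding R2_def by (rule diag_prod[OF U])
  also have "eqn n \<dots> (mm n U (mm n Idm (qmat_H U)))"
    by (intro eqn_mmR eqn_mmL) (use x in \<open>auto simp: eqn_def diagm_def Idm_def\<close>)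
  also have "eqn n \<dots> (mm n U (qmat_H U))" by (intro eqn_mmR eqn_Idm_left)
  also have "eqn n \<dots> Idm" by (rule unitary_right[OF U])
  finally show ?thesis by blast
qed

lemma right_inv_unique:
  assumes ev: "herm_eigenvalues n B lam" and x: "\<forall>i<n. x \<noteq> lam i"
    and R1: "eqn n (mm n (Nm x B) R1) Idm" and R2: "eqn n (mm n (Nm x B) R2) Idm"
  shows "eqn n R1 R2"
proof -
  obtain L where L: "eqn n (mm n L (Nm x B)) Idm" using left_inv_exists[OF ev x] by blast
  have "eqn n R1 L" by (rule inverse_unique[OF R1 L])
  moreover have "eqn n R2 L" by (rule inverse_unique[OF R2 L])
  ultimately show ?thesis by (meson eqn_sym eqn_trans)
qed

lemma perk:
  assumes ev: "herm_eigenvalues m A lam" and k: "k < m"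
    and evC: "herm_eigenvalues (m - 1) (\<lambda>a b. A (sk k a) (sk k b)) mu"
  shows "eventually (\<lambda>x. \<forall>R. eqn m (mm m (Nm x A) R) Idm \<longrightarrow>
            quat.Re (R k k) * poly (cpoly lam m) x = poly (cpoly mu (m - 1)) x) at_top"
proof -
  have hA: "hermitian m A" using ev unfolding herm_eigenvalues_def by auto
  obtain V where V: "unitary (m - 1) V" and D:
    "\<forall>i<m - 1. \<forall>j<m - 1. mm (m - 1) (qmat_H V) (mm (m - 1) (\<lambda>a b. A (sk k a) (sk k b)) V) i j
        = (if i = j then qreal (mu i) else 0)"
    using evC unfolding herm_eigenvalues_def by auto
  have D': "eqn (m - 1) (mm (m - 1) (qmat_H V) (mm (m - 1) (\<lambda>a b. A (sk k a) (sk k b)) V)) (diagm mu)"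
    using D unfolding eqn_def diagm_def by auto
  define W where "W = Wk k V"
  define cv where "cv = (\<lambda>a. \<Sum>a'<m - 1. qcnj (V a' a) * A (sk k a') k)"
  define A' where "A' = mm m (qmat_H W) (mm m A W)"
  define al where "al = quat.Re (A k k)"
  define w where "w = (\<lambda>a. nsq (cv a))"
  define f where "f = fpoly al w mu (m - 1)"
  have W: "unitary m W" unfolding W_def by (rule Wk_unitary[OF k V])
  note cj0 = Wk_conj[OF k hA D']
  have cj1: "\<forall>a<m - 1. \<forall>b<m - 1. A' (sk k a) (sk k b) = (if a = b then qreal (mu a) else 0)"
    using cj0(1) unfolding A'_def W_def .
  have cj2: "A' k k = qreal al" using cj0(2) unfolding A'_def W_def al_def .
  have cj3: "\<forall>a<m - 1. A' (sk k a) k = cv a" using cj0(3) unfolding A'_def W_def cv_def by simp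
  have cj4: "\<forall>b<m - 1. A' k (sk k b) = qcnj (cv b)" using cj0(4) unfolding A'_def W_def cv_def by simp
  define good where "good = (\<lambda>x. (\<forall>i<m. lam i < x) \<and> (\<forall>a<m - 1. mu a + 1 < x) \<and> al + (\<Sum>a<m - 1. w a) + 1 < x)"
  have ev_good: "eventually good at_top"
  proof -
    have "eventually (\<lambda>x. \<forall>i\<in>{..<m}. lam i < x) at_top"
      by (intro eventually_ball_finite) (auto intro: eventually_gt_at_top)
    moreover have "eventually (\<lambda>x. \<forall>a\<in>{..<m - 1}. mu a + 1 < x) at_top"
      by (intro eventually_ball_finite) (auto intro: eventually_gt_at_top)
    moreover have "eventually (\<lambda>x. al + (\<Sum>a<m - 1. w a) + 1 < x) at_top"
      by (rule eventually_gt_at_top)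
    ultimately show ?thesis unfolding good_def by eventually_elim auto
  qed
  have key: "(\<forall>a<m - 1. x \<noteq> mu a) \<and> (\<forall>i<m. x \<noteq> lam i) \<and> sgf al w mu (m - 1) x > 0 \<and>
      eqn m (mm m (Nm x A) (mm m W (mm m (Rarr k mu cv x (sgf al w mu (m - 1) x)) (qmat_H W)))) Idm"
    if g: "good x" for x
  proof -
    have xmu: "\<forall>a<m - 1. x \<noteq> mu a" using g unfolding good_def by force
    have xlam: "\<forall>i<m. x \<noteq> lam i" using g unfolding good_def by force
    have "(\<Sum>a<m - 1. w a / (x - mu a)) \<le> (\<Sum>a<m - 1. w a)"
    proof (rule sum_mono)
      fix a assume a: "a \<in> {..<m - 1}"
      have "1 \<le> x - mu a" using g a unfolding good_def by force
      moreover have "0 \<le> w a" unfolding w_def by (rule nsq_nonneg)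
      ultimately have "w a / (x - mu a) \<le> w a / 1"
        by (intro divide_left_mono) auto
      then show "w a / (x - mu a) \<le> w a" by simp
    qed
    then have sgp: "sgf al w mu (m - 1) x > 0" using g unfolding good_def sgf_def by linarith
    have inv: "eqn m (mm m (Nm x A') (Rarr k mu cv x (sgf al w mu (m - 1) x))) Idm"
      by (rule arrow_inv[OF k cj1 cj2 cj3 cj4 xmu]) (use sgp in \<open>auto simp: sgf_def w_def\<close>)
    have "eqn m (mm m (Nm x A) (mm m W (mm m (Rarr k mu cv x (sgf al w mu (m - 1) x)) (qmat_H W)))) Idm"
      by (rule sim_inv[OF W inv[unfolded A'_def]])
    with xmu xlam sgp show ?thesis by blast
  qed
  define sg where "sg = sgf al w mu (m - 1)"
  define RW where "RW = (\<lambda>x. mm m W (mm m (Rarr k mu cv x (sg x)) (qmat_H W)))"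
  have m0: "Suc (m - 1) = m" using k by simp
  have trRW: "mtr m (RW x) = 1 / sg x + ((\<Sum>a<m - 1. 1 / (x - mu a)) + (\<Sum>a<m - 1. w a / ((x - mu a) * (x - mu a))) / sg x)" for x
    unfolding RW_def sim_trace[OF W] mtr_Rarr[OF k] sum.distrib
    by (simp add: w_def sum_divide_distrib)
  have RWkk: "RW x k k = qreal (1 / sg x)" for x
    unfolding RW_def W_def Wk_kk[OF k] by (simp add: Rarr_simps)
  have fcp: "cpoly lam m = f"
  proof (rule monic_logderiv_eq[OF cpoly_deg _ cpoly_lc])
    show "degree f = m" "lead_coeff f = 1" using fpoly_deg[of al w mu "m - 1"] m0 by (auto simp: f_def)
    show "pderiv (cpoly lam m) * f = pderiv f * cpoly lam m"
    proof (rule poly_eq_eventually)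
      show "eventually (\<lambda>x. poly (pderiv (cpoly lam m) * f) x = poly (pderiv f * cpoly lam m) x) at_top"
        using ev_good
      proof eventually_elim
        case (elim x)
        note kx = key[OF elim, folded sg_def]
        have xmu: "\<forall>a<m - 1. x \<noteq> mu a" and xlam: "\<forall>i<m. x \<noteq> lam i" and sgp: "sg x > 0"
          using kx by auto
        have inv: "eqn m (mm m (Nm x A) (RW x)) Idm" using kx unfolding RW_def by auto
        define q where "q = poly (cpoly mu (m - 1)) x"
        define T where "T = (\<Sum>a<m - 1. 1 / (x - mu a))"
        define U where "U = (\<Sum>a<m - 1. w a / ((x - mu a) * (x - mu a)))"
        have "(\<Sum>i<m. 1 / (x - lam i)) = mtr m (RW x)" using trace_resolvent[OF ev xlam inv] by simp
        also have "\<dots> = 1 / sg x + (T + U / sg x)" unfolding trRW T_def U_def ..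
        finally have tr: "(\<Sum>i<m. 1 / (x - lam i)) = 1 / sg x + (T + U / sg x)" .
        have fx: "poly f x = sg x * q" unfolding f_def q_def sg_def by (rule fpoly_poly[OF xmu])
        have f'x: "poly (pderiv f) x = (1 + U) * q + sg x * (q * T)"
          unfolding f_def q_def sg_def T_def U_def by (rule fpoly_deriv[OF xmu])
        have "poly (pderiv (cpoly lam m) * f) x = poly (cpoly lam m) x * (1 / sg x + (T + U / sg x)) * (sg x * q)"
          using cpoly_logderiv[OF xlam] tr fx by simp
        also have "\<dots> = poly (cpoly lam m) x * ((1 + U) * q + sg x * (q * T))"
          using sgp by (simp add: field_simps)
        also have "\<dots> = poly (pderiv f * cpoly lam m) x" using f'x by simp
        finally show ?case .
      qed
    qed
  qed
  show ?thesis using ev_good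
  proof eventually_elim
    case (elim x)
    note kx = key[OF elim, folded sg_def]
    have xmu: "\<forall>a<m - 1. x \<noteq> mu a" and xlam: "\<forall>i<m. x \<noteq> lam i" and sgp: "sg x > 0"
      using kx by auto
    have inv: "eqn m (mm m (Nm x A) (RW x)) Idm" using kx unfolding RW_def by auto
    show ?case
    proof (intro allI impI)
      fix R assume R: "eqn m (mm m (Nm x A) R) Idm"
      have "R k k = RW x k k" using right_inv_unique[OF ev xlam R inv] k by (simp add: eqn_def)
      then have "quat.Re (R k k) = 1 / sg x" by (simp add: RWkk)
      moreover have "poly (cpoly lam m) x = sg x * poly (cpoly mu (m - 1)) x"
        unfolding fcp f_def sg_def by (rule fpoly_poly[OF xmu])
      ultimately show "quat.Re (R k k) * poly (cpoly lam m) x = poly (cpoly mu (m - 1)) x"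
        using sgp by simp
    qed
  qed
qed

lemma deriv_identity:
  assumes ev: "herm_eigenvalues m A lam"
    and evC: "\<forall>k<m. herm_eigenvalues (m - 1) (\<lambda>a b. A (sk k a) (sk k b)) (mu k)"
  shows "pderiv (cpoly lam m) = (\<Sum>k<m. cpoly (mu k) (m - 1))"
proof (rule poly_eq_eventually)
  have e1: "eventually (\<lambda>x. \<forall>k\<in>{..<m}. \<forall>R. eqn m (mm m (Nm x A) R) Idm \<longrightarrow>
            quat.Re (R k k) * poly (cpoly lam m) x = poly (cpoly (mu k) (m - 1)) x) at_top"
    by (intro eventually_ball_finite ballI perk[OF ev] evC[rule_format]) auto
  have e2: "eventually (\<lambda>x. \<forall>i\<in>{..<m}. lam i < x) at_top"
    by (intro eventually_ball_finite) (auto intro: eventually_gt_at_top)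
  show "eventually (\<lambda>x. poly (pderiv (cpoly lam m)) x = poly (\<Sum>k<m. cpoly (mu k) (m - 1)) x) at_top"
    using e1 e2
  proof eventually_elim
    case (elim x)
    then have xlam: "\<forall>i<m. x \<noteq> lam i" by force
    obtain R where R: "eqn m (mm m (Nm x A) R) Idm" using resolvent_exists[OF ev xlam] by blast
    have "poly (\<Sum>k<m. cpoly (mu k) (m - 1)) x = (\<Sum>k<m. quat.Re (R k k) * poly (cpoly lam m) x)"
      unfolding poly_sum using elim(1) R by simp
    also have "\<dots> = mtr m R * poly (cpoly lam m) x" by (simp add: mtr_def sum_distrib_right)
    also have "\<dots> = poly (pderiv (cpoly lam m)) x"
      using trace_resolvent[OF ev xlam R] cpoly_logderiv[OF xlam] by simp
    finally show ?case by simp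
  qed
qed


definition esym :: "(nat \<Rightarrow> real) \<Rightarrow> nat \<Rightarrow> nat \<Rightarrow> real" where
  "esym lam n j = (\<Sum>S\<in>{S. S \<subseteq> {..<n} \<and> card S = j}. \<Prod>i\<in>S. lam i)"

lemma coeff_cpoly:
  assumes j: "j \<le> n"
  shows "coeff (cpoly lam n) (n - j) = (-1)^j * esym lam n j"
proof -
  have "cpoly lam n = (\<Prod>i<n. [:- lam i:] + monom 1 1)"
    unfolding cpoly_def by (intro prod.cong refl) (simp add: monom_Suc)
  also have "\<dots> = (\<Sum>X\<in>Pow {..<n}. (\<Prod>i\<in>X. [:- lam i:]) * (\<Prod>i\<in>{..<n} - X. monom 1 1))"
    by (rule prod_add) simp
  also have "\<dots> = (\<Sum>X\<in>Pow {..<n}. [:\<Prod>i\<in>X. - lam i:] * monom 1 (n - card X))"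
  proof (intro sum.cong refl)
    fix X assume X: "X \<in> Pow {..<n}"
    then have fX: "finite X" by (auto intro: finite_subset)
    have "(\<Prod>i\<in>X. [:- lam i:]) = [:\<Prod>i\<in>X. - lam i:]"
      using fX by (induction X rule: finite_induct) auto
    moreover have "(\<Prod>i\<in>{..<n} - X. monom (1::real) 1) = monom 1 (n - card X)"
      using X fX by (simp add: monom_power card_Diff_subset)
    ultimately show "(\<Prod>i\<in>X. [:- lam i:]) * (\<Prod>i\<in>{..<n} - X. monom 1 1) = [:\<Prod>i\<in>X. - lam i:] * monom 1 (n - card X)"
      by simp
  qed
  finally have cp: "cpoly lam n = (\<Sum>X\<in>Pow {..<n}. [:\<Prod>i\<in>X. - lam i:] * monom 1 (n - card X))" .
  have "coeff (cpoly lam n) (n - j) = (\<Sum>X\<in>Pow {..<n}. if card X = j then (\<Prod>i\<in>X. - lam i) else 0)"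
    unfolding cp coeff_sum
  proof (intro sum.cong refl)
    fix X assume X: "X \<in> Pow {..<n}"
    then have "card X \<le> n" by (metis PowD card_lessThan card_mono finite_lessThan)
    then show "coeff ([:\<Prod>i\<in>X. - lam i:] * monom 1 (n - card X)) (n - j) = (if card X = j then \<Prod>i\<in>X. - lam i else 0)"
      using j by (auto simp: coeff_monom)
  qed
  also have "\<dots> = (\<Sum>X\<in>{S. S \<subseteq> {..<n} \<and> card S = j}. \<Prod>i\<in>X. - lam i)"
    by (subst sum.inter_filter[symmetric]) (auto intro!: sum.cong)
  also have "\<dots> = (\<Sum>X\<in>{S. S \<subseteq> {..<n} \<and> card S = j}. (-1)^j * (\<Prod>i\<in>X. lam i))"
    by (intro sum.cong refl) (simp add: prod_uminus)
  finally show ?thesis by (simp add: esym_def sum_distrib_left)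
qed


lemma esym_deriv:
  assumes d: "pderiv (cpoly lam m) = (\<Sum>k<m. cpoly (mu k) (m - 1))" and j: "j < m"
  shows "real (m - j) * esym lam m j = (\<Sum>k<m. esym (mu k) (m - 1) j)"
proof -
  have "coeff (pderiv (cpoly lam m)) (m - 1 - j) = real (m - j) * ((-1)^j * esym lam m j)"
    unfolding coeff_pderiv using j coeff_cpoly[of j m lam]
    by (simp add: Suc_diff_Suc)
  moreover have "coeff (\<Sum>k<m. cpoly (mu k) (m - 1)) (m - 1 - j) = (\<Sum>k<m. (-1)^j * esym (mu k) (m - 1) j)"
    unfolding coeff_sum using j by (intro sum.cong refl coeff_cpoly) auto
  ultimately have "real (m - j) * ((-1)^j * esym lam m j) = (-1)^j * (\<Sum>k<m. esym (mu k) (m - 1) j)"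
    using d by (simp add: sum_distrib_left)
  then show ?thesis by (cases "even j") auto
qed

lemma sorted_list_of_set_image_mono:
  assumes f: "\<And>a b. a < b \<Longrightarrow> f a < (f b :: nat)" and T: "finite T"
  shows "sorted_list_of_set (f ` T) = map f (sorted_list_of_set (T :: nat set))"
proof -
  have inj: "inj f" using f by (metis injI linorder_neqE_nat less_irrefl)
  have "sorted_wrt (<) (map f (sorted_list_of_set T))"
    using sorted_wrt_mono_rel[OF _ strict_sorted_list_of_set[of T]] f
    by (simp add: sorted_wrt_map)
  moreover have "set (map f (sorted_list_of_set T)) = f ` T" using T by simp
  moreover have "length (map f (sorted_list_of_set T)) = card (f ` T)"
    using T inj by (simp add: card_image inj_on_subset)
  ultimately show ?thesis using T
    by (subst sorted_list_of_set_unique[symmetric]) auto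
qed

lemma hermitian_sub:
  assumes "hermitian m A" "k < m"
  shows "hermitian (m - 1) (\<lambda>a b. A (sk k a) (sk k b))"
  using assms unfolding hermitian_def qmat_H_def by (auto simp: sk_less)

lemma psub_C:
  assumes T: "finite T"
  shows "eqn (card T) (principal_sub (\<lambda>a b. A (sk k a) (sk k b)) T) (principal_sub A (sk k ` T))"
proof -
  have sl: "sorted_list_of_set (sk k ` T) = map (sk k) (sorted_list_of_set T)"
    by (rule sorted_list_of_set_image_mono[OF _ T]) (rule sk_mono)
  show ?thesis unfolding eqn_def principal_sub_def sl using T by simp
qed

lemma psub_full: "eqn m (principal_sub A {..<m}) A"
  unfolding eqn_def principal_sub_def by (simp add: lessThan_atLeast0)

lemma reindex_sk:
  assumes k: "k < m"
  shows "(\<Sum>T\<in>{T. T \<subseteq> {..<m - 1} \<and> card T = j}. g (sk k ` T))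
       = (\<Sum>S\<in>{S. S \<subseteq> {..<m} - {k} \<and> card S = j}. g S)"
proof -
  have inj: "inj_on ((`) (sk k)) {T. T \<subseteq> {..<m - 1} \<and> card T = j}"
    by (rule inj_onI) (simp add: inj_image_eq_iff inj_on_def)
  have img: "(`) (sk k) ` {T. T \<subseteq> {..<m - 1} \<and> card T = j} = {S. S \<subseteq> {..<m} - {k} \<and> card S = j}"
  proof
    show "(`) (sk k) ` {T. T \<subseteq> {..<m - 1} \<and> card T = j} \<subseteq> {S. S \<subseteq> {..<m} - {k} \<and> card S = j}"
      using k by (auto simp: sk_less card_image inj_on_def)
    show "{S. S \<subseteq> {..<m} - {k} \<and> card S = j} \<subseteq> (`) (sk k) ` {T. T \<subseteq> {..<m - 1} \<and> card T = j}"
    proof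
      fix S assume S: "S \<in> {S. S \<subseteq> {..<m} - {k} \<and> card S = j}"
      have eq: "S = sk k ` (si k ` S)"
      proof -
        have "sk k ` (si k ` S) = (\<lambda>p. p) ` S" unfolding image_image
        proof (intro image_cong refl)
          fix x assume "x \<in> S"
          then have "x \<noteq> k" using S by auto
          then show "sk k (si k x) = x" by (rule sk_si)
        qed
        then show ?thesis by simp
      qed
      have sub: "si k ` S \<subseteq> {..<m - 1}"
      proof
        fix y assume "y \<in> si k ` S"
        then obtain x where x: "x \<in> S" "y = si k x" by blast
        then have "x < m" "x \<noteq> k" using S by auto
        then show "y \<in> {..<m - 1}" using si_less[of x m k] k x by simp
      qed
      have "inj_on (si k) S"
      proof (rule inj_onI)
        fix x y assume "x \<in> S" "y \<in> S" "si k x = si k y"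
        moreover have "x \<noteq> k" "y \<noteq> k" using S \<open>x \<in> S\<close> \<open>y \<in> S\<close> by auto
        ultimately show "x = y" using sk_si by metis
      qed
      then have "card (si k ` S) = j" using S by (simp add: card_image)
      with eq sub show "S \<in> (`) (sk k) ` {T. T \<subseteq> {..<m - 1} \<and> card T = j}" by blast
    qed
  qed
  show ?thesis using sum.reindex[OF inj, of g] img by simp
qed

lemma double_count:
  "(\<Sum>k<m. \<Sum>S\<in>{S. S \<subseteq> {..<m} - {k} \<and> card S = j}. g S)
     = (\<Sum>S\<in>{S. S \<subseteq> {..<m} \<and> card S = j}. real (m - j) * (g S :: real))"
proof -
  define F where "F = {S. S \<subseteq> {..<m} \<and> card S = j}"
  have fF: "finite F" unfolding F_def by (rule finite_subset[of _ "Pow {..<m}"]) auto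
  have "(\<Sum>k<m. \<Sum>S\<in>{S. S \<subseteq> {..<m} - {k} \<and> card S = j}. g S) = (\<Sum>k<m. \<Sum>S\<in>F. if k \<notin> S then g S else 0)"
  proof (rule sum.cong[OF refl])
    fix k assume k: "k \<in> {..<m}"
    have "{S. S \<subseteq> {..<m} - {k} \<and> card S = j} = {S\<in>F. k \<notin> S}" unfolding F_def by auto
    then show "(\<Sum>S\<in>{S. S \<subseteq> {..<m} - {k} \<and> card S = j}. g S) = (\<Sum>S\<in>F. if k \<notin> S then g S else 0)"
      using fF by (simp add: sum.inter_filter)
  qed
  also have "\<dots> = (\<Sum>S\<in>F. \<Sum>k<m. if k \<notin> S then g S else 0)" by (rule sum.swap)
  also have "\<dots> = (\<Sum>S\<in>F. real (m - j) * g S)"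
  proof (rule sum.cong[OF refl])
    fix S assume S: "S \<in> F"
    have "(\<Sum>k<m. if k \<notin> S then g S else 0) = (\<Sum>k\<in>{..<m} - S. g S)"
      by (simp add: sum.inter_filter[symmetric] set_diff_eq)
    also have "\<dots> = real (card ({..<m} - S)) * g S" by simp
    also have "card ({..<m} - S) = m - j"
    proof -
      have S1: "S \<subseteq> {..<m}" and S2: "card S = j" using S unfolding F_def by auto
      have "card ({..<m} - S) = card {..<m} - card S"
        by (rule card_Diff_subset) (use S1 in \<open>auto intro: finite_subset\<close>)
      then show ?thesis using S2 by simp
    qed
    finally show "(\<Sum>k<m. if k \<notin> S then g S else 0) = real (m - j) * g S" .
  qed
  finally show ?thesis unfolding F_def .
qed


lemma nsq_qreal_mult: "nsq (qreal a * x) = a^2 * nsq x"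
  by (simp add: nsq_def power2_eq_square algebra_simps)

lemma Re_qcnj_mult: "quat.Re (qcnj x * y) = quat.Re x * quat.Re y + Im1 x * Im1 y + Im2 x * Im2 y + Im3 x * Im3 y"
  by simp

lemma nsq_diff: "nsq (x - y) = nsq x + nsq y - 2 * quat.Re (qcnj x * y)"
  by (simp add: nsq_def power2_eq_square algebra_simps)

lemma Re_qcnj_self: "quat.Re (qcnj x * x) = nsq x"
  by (simp add: nsq_def power2_eq_square)

lemma qcnj_qreal_mult: "qcnj (qreal a * x) = qreal a * qcnj x"
  by (simp add: qcnj_mult qreal_comm)

definition phase :: "quat \<Rightarrow> quat" where
  "phase t = (if t = 0 then 1 else qreal (1 / sqrt (nsq t)) * t)"

lemma phase_unit: "nsq (phase t) = 1"
proof (cases "t = 0")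
  case True then show ?thesis by (simp add: phase_def nsq_def)
next
  case False
  then have "nsq t > 0" using nsq_nonneg[of t] nsq_eq_0[of t] by linarith
  then show ?thesis using False by (simp add: phase_def nsq_qreal_mult power_divide)
qed

lemma phase_qcnj_mult: "qcnj (phase t) * phase t = 1"
  using phase_unit[of t] by (simp add: qcnj_mult_self)

lemma phase_eq: "t = qreal (sqrt (nsq t)) * phase t"
proof (cases "t = 0")
  case True then show ?thesis by (simp add: phase_def nsq_def)
next
  case False
  then have "nsq t > 0" using nsq_nonneg[of t] nsq_eq_0[of t] by linarith
  then show ?thesis using False by (simp add: phase_def qr_simps)
qed

lemma qcnj_t_phase: "qcnj t * phase t = qreal (sqrt (nsq t))"
proof -
  have "qcnj t * phase t = qreal (sqrt (nsq t)) * (qcnj (phase t) * phase t)"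
    by (subst (1) phase_eq) (simp add: qcnj_qreal_mult mult.assoc)
  then show ?thesis by (simp add: phase_qcnj_mult)
qed

lemma outer_mult: "(qreal a * (x * qcnj y)) * (qreal b * (y * qcnj z)) = qreal (a * b * nsq y) * (x * qcnj z)"
proof -
  have 1: "(qreal a * (x * qcnj y)) * (qreal b * (y * qcnj z)) = qreal a * ((x * qcnj y) * (qreal b * (y * qcnj z)))"
    by (simp only: mult.assoc)
  have 2: "(x * qcnj y) * (qreal b * (y * qcnj z)) = qreal b * ((x * qcnj y) * (y * qcnj z))"
    by (rule qreal_left2)
  have 3: "(x * qcnj y) * (y * qcnj z) = x * (qcnj y * y) * qcnj z"
    by (simp only: mult.assoc)
  have 4: "x * qreal (nsq y) * qcnj z = qreal (nsq y) * (x * qcnj z)"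
    by (metis mult.assoc qreal_comm)
  show ?thesis unfolding 1 2 3 qcnj_mult_self 4 by (simp only: qr_simps mult.assoc[symmetric])
qed

lemma qcnj_outer: "qcnj (qreal a * (x * qcnj y)) = qreal a * (y * qcnj x)"
  by (simp add: quat_eq_iff algebra_simps)

lemma householder:
  assumes n: "0 < n" and wu: "(\<Sum>i<n. nsq (w i)) = 1"
  shows "\<exists>W. unitary n W \<and> (\<forall>i<n. W i 0 = w i)"
proof -
  define t where "t = w 0"
  define sg where "sg = phase t"
  define r where "r = sqrt (nsq t)"
  define v where "v = (\<lambda>i. w i - (if i = 0 then sg else 0))"
  define c where "c = (\<Sum>i<n. nsq (v i))"
  define a where "a = 2 / c"
  define P where "P = (\<lambda>i j. qreal a * (v i * qcnj (v j)))"
  define H where "H = (\<lambda>i j. Idm i j - P i j)"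
  define W where "W = (\<lambda>i j. H i j * (if j = 0 then sg else 1))"
  have tsg: "qcnj t * sg = qreal r" unfolding sg_def r_def by (rule qcnj_t_phase)
  have sgu: "qcnj sg * sg = 1" unfolding sg_def by (rule phase_qcnj_mult)
  have nsg: "nsq sg = 1" unfolding sg_def by (rule phase_unit)
  have cval: "c = 2 - 2 * r"
  proof -
    have "c = (\<Sum>i<n. nsq (w i) + (if i = 0 then nsq (t - sg) - nsq t else 0))"
      unfolding c_def v_def t_def by (intro sum.cong refl) auto
    also have "\<dots> = 1 + (nsq (t - sg) - nsq t)" using n by (simp add: sum.distrib wu)
    also have "nsq (t - sg) = nsq t + 1 - 2 * r" unfolding nsq_diff tsg nsg by simp
    finally show ?thesis by simp
  qed
  have PP: "mm n P P i j = qreal (a * c) * P i j" for i j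
  proof -
    have "mm n P P i j = (\<Sum>k<n. qreal (a * a * nsq (v k)) * (v i * qcnj (v j)))"
      unfolding qmat_mult_def P_def outer_mult ..
    also have "\<dots> = qreal (\<Sum>k<n. a * a * nsq (v k)) * (v i * qcnj (v j))"
      by (simp add: sum_distrib_right qreal_sum)
    also have "(\<Sum>k<n. a * a * nsq (v k)) = a * a * c"
      by (simp add: c_def sum_distrib_left)
    also have "qreal (a * a * c) * (v i * qcnj (v j)) = qreal (a * c) * P i j"
      by (simp add: P_def qr_simps mult_ac)
    finally show ?thesis .
  qed
  have HH: "eqn n (mm n H H) Idm"
    unfolding eqn_def
  proof (intro allI impI)
    fix i j assume i: "i < n" and j: "j < n"
    have "mm n H H i j = Idm i j - P i j - P i j + qreal (a * c) * P i j"
      unfolding H_def mm_diff_left mm_diff_right using i j by (simp add: PP)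
    also have "\<dots> = Idm i j + qreal (a * c - 2) * P i j"
      by (simp only: quat_eq_iff quat_comps) (simp add: algebra_simps)
    also have "qreal (a * c - 2) * P i j = 0"
      by (cases "c = 0") (auto simp: a_def P_def)
    finally show "mm n H H i j = Idm i j" by simp
  qed
  have HS: "qmat_H H = H"
    by (auto simp: fun_eq_iff qmat_H_def H_def P_def Idm_def qcnj_outer)
  have Wu: "unitary n W"
    unfolding unitary_def
  proof (intro allI impI)
    fix i j assume i: "i < n" and j: "j < n"
    have "mm n (qmat_H W) W i j = (\<Sum>k<n. qcnj (if i = 0 then sg else 1) * (qcnj (H k i) * H k j) * (if j = 0 then sg else 1))"
      unfolding qmat_mult_def qmat_H_def W_def by (intro sum.cong refl) (simp only: qcnj_mult mult.assoc)
    also have "\<dots> = qcnj (if i = 0 then sg else 1) * mm n (qmat_H H) H i j * (if j = 0 then sg else 1)"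
      unfolding qmat_mult_def qmat_H_def by (simp only: sum_distrib_left sum_distrib_right)
    also have "mm n (qmat_H H) H i j = (if i = j then 1 else 0)" using HH i j unfolding HS by (simp add: eqn_def Idm_def)
    finally show "mm n (qmat_H W) W i j = (if i = j then 1 else 0)" using sgu
      by (cases "i = j"; cases "i = 0") auto
  qed
  have col: "W i 0 = w i" if i: "i < n" for i
  proof -
    have "qcnj (v 0) * sg = qcnj t * sg - qcnj sg * sg" by (simp add: v_def t_def left_diff_distrib)
    also have "\<dots> = qreal (r - 1)" unfolding tsg sgu by (simp add: quat_eq_iff)
    finally have v0: "qcnj (v 0) * sg = qreal (r - 1)" .
    have "W i 0 = Idm i 0 * sg - qreal a * (v i * (qcnj (v 0) * sg))"
      by (simp add: W_def H_def P_def left_diff_distrib mult.assoc)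
    also have "\<dots> = Idm i 0 * sg - qreal (a * (r - 1)) * v i"
      unfolding v0 by (simp add: qreal_comm[of "r - 1" "v i", symmetric] qr_simps)
    also have "\<dots> = w i"
    proof (cases "c = 0")
      case True
      then have "\<forall>k<n. nsq (v k) = 0" unfolding c_def
        by (subst (asm) sum_nonneg_eq_0_iff) (auto intro: nsq_nonneg)
      then have "v i = 0" using i by (simp add: nsq_eq_0)
      then show ?thesis using True by (simp add: a_def v_def Idm_def split: if_splits)
    next
      case False
      then have "a * (r - 1) = -1" unfolding a_def cval by (simp add: field_simps)
      then show ?thesis by (simp add: v_def Idm_def quat_eq_iff)
    qed
    finally show ?thesis .
  qed
  show ?thesis using Wu col by blast
qed


definition qc :: "quat \<Rightarrow> nat \<Rightarrow> real" where
  "qc x r = (if r = 0 then quat.Re x else if r = 1 then Im1 x else if r = 2 then Im2 x else Im3 x)"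

definition eb :: "nat \<Rightarrow> quat" where
  "eb s = (if s = 0 then Quat 1 0 0 0 else if s = 1 then Quat 0 1 0 0 else if s = 2 then Quat 0 0 1 0 else Quat 0 0 0 1)"

definition Lq :: "quat \<Rightarrow> nat \<Rightarrow> nat \<Rightarrow> real" where
  "Lq q r s = qc (q * eb s) r"

definition toq :: "(nat \<Rightarrow> real) \<Rightarrow> nat \<Rightarrow> quat" where
  "toq y j = Quat (y (4 * j)) (y (4 * j + 1)) (y (4 * j + 2)) (y (4 * j + 3))"

lemma sum4: "(\<Sum>s<(4::nat). f s) = f 0 + f 1 + f 2 + (f 3 :: 'a :: comm_monoid_add)"
  by (simp add: numeral_eq_Suc add.assoc)

lemma Lq_lin: "r < 4 \<Longrightarrow> (\<Sum>s<4. Lq q r s * qc w s) = qc (q * w) r"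
  unfolding sum4 Lq_def
  by (auto simp: qc_def eb_def numeral_eq_Suc less_Suc_eq algebra_simps)

lemma Lq_sym: "r < 4 \<Longrightarrow> s < 4 \<Longrightarrow> Lq (qcnj q) s r = Lq q r s"
  unfolding Lq_def
  by (auto simp: qc_def eb_def numeral_eq_Suc less_Suc_eq)

lemma qc_eq: "(\<forall>r<4. qc x r = qc y r) \<Longrightarrow> x = y"
  by (auto simp: quat_eq_iff qc_def dest: spec[of _ 0] spec[of _ 1] spec[of _ 2] spec[of _ 3])

lemma qc_toq: "r < 4 \<Longrightarrow> qc (toq y j) r = y (4 * j + r)"
  by (auto simp: qc_def toq_def numeral_eq_Suc less_Suc_eq)

lemma qc_add: "qc (x + y) r = qc x r + qc y r"
  by (simp add: qc_def)
lemma qc_sum: "qc (sum f A) r = (\<Sum>a\<in>A. qc (f a) r)"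
  by (simp add: qc_def)
lemma qc_mult_qreal: "qc (x * qreal c) r = qc x r * c"
  by (simp add: qc_def)

lemma sum_4n: "(\<Sum>b<4 * (n::nat). f b) = (\<Sum>j<n. \<Sum>s<4. f (4 * j + s))"
proof (induction n)
  case 0 then show ?case by simp
next
  case (Suc n)
  have e: "4 * Suc n = Suc (Suc (Suc (Suc (4 * n))))" by simp
  have t: "4 * n + 3 = Suc (Suc (Suc (4 * n)))" by simp
  show ?case unfolding e using Suc by (simp add: sum4 add.assoc t)
qed

lemma nsq_qc: "nsq x = (\<Sum>s<4. (qc x s)^2)"
  by (simp add: sum4 nsq_def qc_def)

definition Phi :: "qmat \<Rightarrow> nat \<Rightarrow> nat \<Rightarrow> real" where
  "Phi B a b = Lq (B (a div 4) (b div 4)) (a mod 4) (b mod 4)"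

lemma Phi_apply:
  assumes r: "r < 4"
  shows "(\<Sum>b<4 * n. Phi B (4 * i + r) b * y b) = qc (\<Sum>j<n. B i j * toq y j) r"
proof -
  have "(\<Sum>b<4 * n. Phi B (4 * i + r) b * y b) = (\<Sum>j<n. \<Sum>s<4. Lq (B i j) r s * qc (toq y j) s)"
    unfolding sum_4n using r by (intro sum.cong refl) (simp add: Phi_def qc_toq)
  also have "\<dots> = (\<Sum>j<n. qc (B i j * toq y j) r)" using r by (simp add: Lq_lin)
  finally show ?thesis by (simp add: qc_sum)
qed

lemma Phi_sym:
  assumes h: "hermitian n B" and a: "a < 4 * n" and b: "b < 4 * n"
  shows "Phi B b a = Phi B a b"
proof -
  have "B (b div 4) (a div 4) = qcnj (B (a div 4) (b div 4))"
    using h a b unfolding hermitian_def qmat_H_def by auto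
  then show ?thesis unfolding Phi_def by (simp add: Lq_sym)
qed

lemma real_eigvec:
  assumes h: "hermitian n B" and n: "0 < n"
  shows "\<exists>y mu. (\<exists>b<4 * n. y b \<noteq> 0) \<and> (\<forall>a<4 * n. (\<Sum>b<4 * n. Phi B a b * y b) = mu * y a)"
proof -
  define N where "N = 4 * n"
  define M where "M = mat N N (\<lambda>(a, b). complex_of_real (Phi B a b))"
  have M: "M \<in> carrier_mat N N" unfolding M_def by simp
  have "spectrum M \<noteq> {}" using spectrum_non_empty[OF M] n by (simp add: N_def)
  then obtain k where "eigenvalue M k" unfolding spectrum_def by auto
  then obtain v where ev: "eigenvector M v k" unfolding eigenvalue_def by auto
  have vc: "v \<in> carrier_vec N" and v0: "v \<noteq> 0\<^sub>v N" and Mv: "M *\<^sub>v v = k \<cdot>\<^sub>v v"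
    using ev M unfolding eigenvector_def by auto
  have E: "(\<Sum>b<N. complex_of_real (Phi B a b) * v $ b) = k * v $ a" if a: "a < N" for a
  proof -
    have "(M *\<^sub>v v) $ a = k * v $ a" using Mv a vc by simp
    moreover have "(M *\<^sub>v v) $ a = (\<Sum>b<N. complex_of_real (Phi B a b) * v $ b)"
      using a vc M unfolding M_def by (simp add: scalar_prod_def lessThan_atLeast0)
    ultimately show ?thesis by simp
  qed
  have nz: "\<exists>b<N. v $ b \<noteq> 0"
  proof (rule ccontr)
    assume "\<not> (\<exists>b<N. v $ b \<noteq> 0)"
    then have "v = 0\<^sub>v N" using vc by (intro eq_vecI) auto
    with v0 show False by simp
  qed
  define s where "s = (\<Sum>a<N. cnj (v $ a) * (\<Sum>b<N. complex_of_real (Phi B a b) * v $ b))"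
  have "cnj s = (\<Sum>a<N. \<Sum>b<N. v $ a * complex_of_real (Phi B a b) * cnj (v $ b))"
    unfolding s_def by (simp add: cnj_sum sum_distrib_left mult.assoc)
  also have "\<dots> = (\<Sum>b<N. \<Sum>a<N. v $ a * complex_of_real (Phi B a b) * cnj (v $ b))" by (rule sum.swap)
  also have "\<dots> = s" unfolding s_def sum_distrib_left
  proof (intro sum.cong refl)
    fix b a assume b: "b \<in> {..<N}" and a: "a \<in> {..<N}"
    show "v $ a * complex_of_real (Phi B a b) * cnj (v $ b) = cnj (v $ b) * (complex_of_real (Phi B b a) * v $ a)"
      using Phi_sym[OF h, of a b] a b by (simp add: N_def)
  qed
  finally have cs: "cnj s = s" .
  define Nn where "Nn = (\<Sum>a<N. (Complex.Re (v $ a))^2 + (Im (v $ a))^2)"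
  have Nn: "Nn > 0"
  proof -
    obtain b where b: "b < N" "v $ b \<noteq> 0" using nz by blast
    then have "(Complex.Re (v $ b))^2 + (Im (v $ b))^2 > 0" by (simp add: complex_eq_iff add_pos_nonneg sum_power2_gt_zero_iff)
    moreover have "(Complex.Re (v $ b))^2 + (Im (v $ b))^2 \<le> Nn"
      unfolding Nn_def using b by (intro member_le_sum) auto
    ultimately show ?thesis by linarith
  qed
  have "s = (\<Sum>a<N. cnj (v $ a) * (k * v $ a))" unfolding s_def using E by simp
  also have "\<dots> = k * complex_of_real Nn"
    unfolding Nn_def by (simp add: sum_distrib_left complex_eq_iff power2_eq_square algebra_simps sum.distrib)
  finally have sk: "s = k * complex_of_real Nn" .
  have "Im s = 0" using cs by (simp add: complex_eq_iff)
  then have ik: "Im k = 0" using sk Nn by simp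
  have ER: "(\<Sum>b<N. Phi B a b * Complex.Re (v $ b)) = Complex.Re k * Complex.Re (v $ a)" if a: "a < N" for a
  proof -
    have "Complex.Re (\<Sum>b<N. complex_of_real (Phi B a b) * v $ b) = (\<Sum>b<N. Phi B a b * Complex.Re (v $ b))"
      by (simp add: Re_sum)
    moreover have "Complex.Re (k * v $ a) = Complex.Re k * Complex.Re (v $ a)" using ik by simp
    ultimately show ?thesis using E[OF a] by metis
  qed
  have EI: "(\<Sum>b<N. Phi B a b * Im (v $ b)) = Complex.Re k * Im (v $ a)" if a: "a < N" for a
  proof -
    have "(\<Sum>b<N. Phi B a b * Im (v $ b)) = Im (\<Sum>b<N. complex_of_real (Phi B a b) * v $ b)"
      by (simp add: Im_sum)
    also have "\<dots> = Im (k * v $ a)" using E[OF a] by (rule arg_cong)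
    also have "\<dots> = Complex.Re k * Im (v $ a)" using ik by simp
    finally show ?thesis .
  qed
  show ?thesis
  proof (cases "\<exists>b<N. Complex.Re (v $ b) \<noteq> 0")
    case True
    show ?thesis
      by (rule exI[of _ "\<lambda>b. Complex.Re (v $ b)"], rule exI[of _ "Complex.Re k"])
         (use True ER in \<open>simp add: N_def\<close>)
  next
    case False
    have "\<exists>b<N. Im (v $ b) \<noteq> 0"
    proof -
      obtain b where b: "b < N" "v $ b \<noteq> 0" using nz by blast
      then have "Complex.Re (v $ b) = 0" using False by blast
      with b have "Im (v $ b) \<noteq> 0" by (simp add: complex_eq_iff)
      with b show ?thesis by blast
    qed
    then show ?thesis
      by (intro exI[of _ "\<lambda>b. Im (v $ b)"] exI[of _ "Complex.Re k"]) (use EI in \<open>simp add: N_def\<close>)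
  qed
qed

lemma nsq_mult_qreal: "nsq (x * qreal c) = c^2 * nsq x"
  by (simp add: nsq_def power2_eq_square algebra_simps)

lemma eigvec_exists2:
  assumes h: "hermitian n B" and n: "0 < n"
  shows "\<exists>w mu. (\<Sum>i<n. nsq (w i)) = 1 \<and> (\<forall>i<n. (\<Sum>j<n. B i j * w j) = w i * qreal mu)"
proof -
  obtain y mu where ynz: "\<exists>b<4 * n. y b \<noteq> 0" and ey: "\<forall>a<4 * n. (\<Sum>b<4 * n. Phi B a b * y b) = mu * y a"
    using real_eigvec[OF h n] by blast
  define w0 where "w0 = toq y"
  have e0: "(\<Sum>j<n. B i j * w0 j) = w0 i * qreal mu" if i: "i < n" for i
  proof (rule qc_eq, intro allI impI)
    fix r :: nat assume r: "r < 4"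
    have a: "4 * i + r < 4 * n" using i r by simp
    have "qc (\<Sum>j<n. B i j * w0 j) r = (\<Sum>b<4 * n. Phi B (4 * i + r) b * y b)"
      unfolding w0_def by (rule Phi_apply[OF r, symmetric])
    also have "\<dots> = mu * y (4 * i + r)" using ey a by blast
    also have "\<dots> = qc (w0 i * qreal mu) r" unfolding qc_mult_qreal w0_def qc_toq[OF r] by simp
    finally show "qc (\<Sum>j<n. B i j * w0 j) r = qc (w0 i * qreal mu) r" .
  qed
  define S where "S = (\<Sum>j<n. nsq (w0 j))"
  have S_eq: "S = (\<Sum>b<4 * n. (y b)^2)"
    unfolding S_def sum_4n nsq_qc w0_def by (intro sum.cong refl) (simp add: qc_toq)
  have Spos: "S > 0"
  proof -
    obtain b where b: "b < 4 * n" "y b \<noteq> 0" using ynz by blast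
    have "(y b)^2 \<le> S" unfolding S_eq using b by (intro member_le_sum) auto
    moreover have "(y b)^2 > 0" using b by simp
    ultimately show ?thesis by linarith
  qed
  define c where "c = 1 / sqrt S"
  define w where "w = (\<lambda>j. w0 j * qreal c)"
  have "(\<Sum>i<n. nsq (w i)) = c^2 * S" unfolding w_def S_def by (simp add: nsq_mult_qreal sum_distrib_left)
  also have "\<dots> = 1" using Spos by (simp add: c_def power_divide)
  finally have wu: "(\<Sum>i<n. nsq (w i)) = 1" .
  have ew: "(\<Sum>j<n. B i j * w j) = w i * qreal mu" if i: "i < n" for i
  proof -
    have "(\<Sum>j<n. B i j * w j) = (\<Sum>j<n. B i j * w0 j) * qreal c"
      unfolding w_def by (simp add: sum_distrib_right mult.assoc)
    also have "\<dots> = w0 i * qreal mu * qreal c" using e0[OF i] by simp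
    also have "\<dots> = w i * qreal mu" unfolding w_def by (simp add: mult.assoc qr_simps mult.commute)
    finally show ?thesis .
  qed
  show ?thesis using wu ew by blast
qed


definition Vext :: "qmat \<Rightarrow> qmat" where
  "Vext V2 i j = (if i = 0 \<and> j = 0 then 1 else if i = 0 \<or> j = 0 then 0 else V2 (i - 1) (j - 1))"

lemma Vext_simps [simp]:
  "Vext V2 0 0 = 1" "Vext V2 0 (Suc j) = 0" "Vext V2 (Suc i) 0 = 0" "Vext V2 (Suc i) (Suc j) = V2 i j"
  by (simp_all add: Vext_def)

lemma Vblock:
  "mm (Suc n) (qmat_H (Vext V2)) (mm (Suc n) X (Vext V2)) 0 0 = X 0 0"
  "mm (Suc n) (qmat_H (Vext V2)) (mm (Suc n) X (Vext V2)) 0 (Suc j) = (\<Sum>q<n. X 0 (Suc q) * V2 q j)"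
  "mm (Suc n) (qmat_H (Vext V2)) (mm (Suc n) X (Vext V2)) (Suc i) 0 = (\<Sum>p<n. qcnj (V2 p i) * X (Suc p) 0)"
  "mm (Suc n) (qmat_H (Vext V2)) (mm (Suc n) X (Vext V2)) (Suc i) (Suc j)
     = mm n (qmat_H V2) (mm n (\<lambda>a b. X (Suc a) (Suc b)) V2) i j"
  by (simp_all add: qmat_mult_def qmat_H_def sum.lessThan_Suc_shift del: sum.lessThan_Suc)

lemma idx0_cases:
  assumes "i < Suc n"
  obtains "i = 0" | i' where "i = Suc i'" "i' < n"
  using assms by (cases i) auto

lemma Vext_unitary:
  assumes V2: "unitary n V2"
  shows "unitary (Suc n) (Vext V2)"
proof -
  have e: "eqn (Suc n) (mm (Suc n) (qmat_H (Vext V2)) (mm (Suc n) Idm (Vext V2))) Idm"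
    unfolding eqn_def
  proof (intro allI impI)
    fix i j assume i: "i < Suc n" and j: "j < Suc n"
    show "mm (Suc n) (qmat_H (Vext V2)) (mm (Suc n) Idm (Vext V2)) i j = Idm i j"
    proof (cases rule: idx0_cases[OF i])
      case 1
      then show ?thesis by (cases rule: idx0_cases[OF j]) (auto simp: Vblock Idm_def)
    next
      case (2 i')
      then show ?thesis
      proof (cases rule: idx0_cases[OF j])
        case 1 then show ?thesis using 2 by (auto simp: Vblock Idm_def)
      next
        case (2 j')
        have "mm n (qmat_H V2) (mm n (\<lambda>a b. Idm (Suc a) (Suc b)) V2) i' j' = mm n (qmat_H V2) V2 i' j'"
        proof -
          have "(\<lambda>a b. Idm (Suc a) (Suc b)) = Idm" by (auto simp: fun_eq_iff Idm_def)
          then show ?thesis using eqn_mm_right[OF eqn_Idm_left 2(2)] by simp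
        qed
        also have "\<dots> = Idm i' j'" using V2 2(2) \<open>i' < n\<close> unfolding unitary_def Idm_def by auto
        finally show ?thesis using 2 \<open>i = Suc i'\<close> by (simp add: Vblock Idm_def)
      qed
    qed
  qed
  have "eqn (Suc n) (mm (Suc n) (qmat_H (Vext V2)) (Vext V2)) Idm"
    using eqn_trans[OF eqn_mmR[OF eqn_sym[OF eqn_Idm_left]] e] .
  then show ?thesis unfolding unitary_def eqn_def Idm_def by auto
qed

lemma herm_eqn: "hermitian n B \<Longrightarrow> eqn n (qmat_H B) B"
  unfolding hermitian_def eqn_def by auto

lemma spectral_exists: "hermitian n B \<Longrightarrow> \<exists>lam. herm_eigenvalues n B lam"
proof (induction n arbitrary: B)
  case 0
  then show ?case unfolding herm_eigenvalues_def unitary_def by auto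
next
  case (Suc n)
  note hB = Suc.prems
  obtain w mu where wu: "(\<Sum>i<Suc n. nsq (w i)) = 1"
    and ew: "\<forall>i<Suc n. (\<Sum>j<Suc n. B i j * w j) = w i * qreal mu"
    using eigvec_exists2[OF hB] by auto
  obtain W where W: "unitary (Suc n) W" and Wc: "\<forall>i<Suc n. W i 0 = w i"
    using householder[OF _ wu] by auto
  define B1 where "B1 = mm (Suc n) (qmat_H W) (mm (Suc n) B W)"
  have col0: "B1 i 0 = (if i = 0 then qreal mu else 0)" if i: "i < Suc n" for i
  proof -
    have "\<And>p. p < Suc n \<Longrightarrow> mm (Suc n) B W p 0 = W p 0 * qreal mu"
      unfolding qmat_mult_def using ew Wc by simp
    then have "B1 i 0 = (\<Sum>p<Suc n. qcnj (W p i) * (W p 0 * qreal mu))"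
      unfolding B1_def qmat_H_def qmat_mult_def[of "Suc n" "\<lambda>i j. qcnj (W j i)"]
      by (intro sum.cong refl) auto
    also have "\<dots> = (\<Sum>p<Suc n. qcnj (W p i) * W p 0) * qreal mu"
      by (simp add: sum_distrib_right mult.assoc del: sum.lessThan_Suc)
    also have "(\<Sum>p<Suc n. qcnj (W p i) * W p 0) = (if i = 0 then 1 else 0)"
      using W i unfolding unitary_def qmat_mult_def qmat_H_def by auto
    finally show ?thesis by simp
  qed
  have hB1: "hermitian (Suc n) B1"
  proof -
    have "qmat_H B1 = mm (Suc n) (qmat_H W) (mm (Suc n) (qmat_H B) W)"
      unfolding B1_def by (simp add: qH_mm mm_assoc)
    also have "eqn (Suc n) \<dots> B1"
      unfolding B1_def by (intro eqn_mmR eqn_mmL herm_eqn hB)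
    finally show ?thesis unfolding hermitian_def eqn_def by auto
  qed
  have row0: "B1 0 j = (if j = 0 then qreal mu else 0)" if j: "j < Suc n" for j
  proof -
    have "B1 0 j = qcnj (B1 j 0)" using hB1 j unfolding hermitian_def qmat_H_def by auto
    then show ?thesis using col0[OF j] by simp
  qed
  define B2 where "B2 = (\<lambda>a b. B1 (Suc a) (Suc b))"
  have hB2: "hermitian n B2" using hB1 unfolding hermitian_def qmat_H_def B2_def by auto
  obtain lam2 where "herm_eigenvalues n B2 lam2" using Suc.IH[OF hB2] by blast
  then obtain V2 where V2: "unitary n V2" and D2:
    "\<forall>i<n. \<forall>j<n. mm n (qmat_H V2) (mm n B2 V2) i j = (if i = j then qreal (lam2 i) else 0)"
    unfolding herm_eigenvalues_def by auto
  define V where "V = Vext V2"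
  define U where "U = mm (Suc n) W V"
  define lam where "lam = (\<lambda>i. if i = 0 then mu else lam2 (i - 1))"
  have V: "unitary (Suc n) V" unfolding V_def by (rule Vext_unitary[OF V2])
  have U: "unitary (Suc n) U"
  proof -
    have "mm (Suc n) (qmat_H U) U = mm (Suc n) (qmat_H V) (mm (Suc n) (mm (Suc n) (qmat_H W) W) V)"
      unfolding U_def by (simp add: qH_mm mm_assoc)
    also have "eqn (Suc n) \<dots> (mm (Suc n) (qmat_H V) (mm (Suc n) Idm V))"
      by (intro eqn_mmR eqn_mmL unitary_left W)
    also have "eqn (Suc n) \<dots> (mm (Suc n) (qmat_H V) V)" by (intro eqn_mmR eqn_Idm_left)
    also have "eqn (Suc n) \<dots> Idm" by (rule unitary_left[OF V])
    finally show ?thesis unfolding unitary_def eqn_def Idm_def by auto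
  qed
  have UBU: "mm (Suc n) (qmat_H U) (mm (Suc n) B U) = mm (Suc n) (qmat_H V) (mm (Suc n) B1 V)"
    unfolding U_def B1_def by (simp add: qH_mm mm_assoc)
  have D: "mm (Suc n) (qmat_H U) (mm (Suc n) B U) i j = (if i = j then qreal (lam i) else 0)"
    if i: "i < Suc n" and j: "j < Suc n" for i j
    unfolding UBU V_def
  proof (cases rule: idx0_cases[OF i])
    case 1
    then show "mm (Suc n) (qmat_H (Vext V2)) (mm (Suc n) B1 (Vext V2)) i j = (if i = j then qreal (lam i) else 0)"
      using row0 by (cases rule: idx0_cases[OF j]) (auto simp: Vblock lam_def)
  next
    case (2 i')
    then show "mm (Suc n) (qmat_H (Vext V2)) (mm (Suc n) B1 (Vext V2)) i j = (if i = j then qreal (lam i) else 0)"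
    proof (cases rule: idx0_cases[OF j])
      case 1 then show ?thesis using 2 col0 by (auto simp: Vblock lam_def)
    next
      case (2 j')
      then show ?thesis using \<open>i = Suc i'\<close> \<open>i' < n\<close> D2 by (auto simp: Vblock lam_def B2_def[symmetric])
    qed
  qed
  show ?case unfolding herm_eigenvalues_def using hB U D by blast
qed


lemma full_case:
  assumes ev: "herm_eigenvalues m A lam"
  shows "esym lam m m = (\<Sum>S\<in>{S. S \<subseteq> {..<m} \<and> card S = m}. herm_det m (principal_sub A S))"
proof -
  have F: "{S. S \<subseteq> {..<m} \<and> card S = m} = {{..<m}}"
    using card_subset_eq[of "{..<m}"] by auto
  have "herm_det m (principal_sub A {..<m}) = herm_det m A" by (rule herm_det_cong[OF psub_full])
  also have "\<dots> = (\<Prod>i<m. lam i)" by (rule herm_det_eq[OF ev])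
  finally show ?thesis unfolding esym_def F by simp
qed

lemma main_ind:
  "herm_eigenvalues m A lam \<Longrightarrow> j \<le> m \<Longrightarrow>
   esym lam m j = (\<Sum>S\<in>{S. S \<subseteq> {..<m} \<and> card S = j}. herm_det j (principal_sub A S))"
proof (induction m arbitrary: A lam j)
  case 0
  then show ?case using full_case[OF "0.prems"(1)] by simp
next
  case (Suc m')
  define m where "m = Suc m'"
  have ev: "herm_eigenvalues m A lam" using Suc.prems m_def by simp
  show ?case
  proof (cases "j = Suc m'")
    case True
    then show ?thesis using full_case[OF ev] m_def by simp
  next
    case False
    then have j: "j < m" using Suc.prems m_def by simp
    have hA: "hermitian m A" using ev unfolding herm_eigenvalues_def by simp
    have "\<forall>k<m. \<exists>mu. herm_eigenvalues (m - 1) (\<lambda>a b. A (sk k a) (sk k b)) mu"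
      using spectral_exists hermitian_sub[OF hA] by blast
    then obtain mu where mu: "\<forall>k<m. herm_eigenvalues (m - 1) (\<lambda>a b. A (sk k a) (sk k b)) (mu k)"
      by metis
    have "real (m - j) * esym lam m j = (\<Sum>k<m. esym (mu k) (m - 1) j)"
      by (rule esym_deriv[OF deriv_identity[OF ev mu] j])
    also have "\<dots> = (\<Sum>k<m. \<Sum>T\<in>{T. T \<subseteq> {..<m - 1} \<and> card T = j}. herm_det j (principal_sub (\<lambda>a b. A (sk k a) (sk k b)) T))"
    proof (rule sum.cong[OF refl])
      fix k assume "k \<in> {..<m}"
      then show "esym (mu k) (m - 1) j = (\<Sum>T\<in>{T. T \<subseteq> {..<m - 1} \<and> card T = j}. herm_det j (principal_sub (\<lambda>a b. A (sk k a) (sk k b)) T))"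
        using Suc.IH[of "\<lambda>a b. A (sk k a) (sk k b)" "mu k" j] mu j m_def by simp
    qed
    also have "\<dots> = (\<Sum>k<m. \<Sum>T\<in>{T. T \<subseteq> {..<m - 1} \<and> card T = j}. herm_det j (principal_sub A (sk k ` T)))"
    proof (rule sum.cong[OF refl], rule sum.cong[OF refl])
      fix k T assume "T \<in> {T. T \<subseteq> {..<m - 1} \<and> card T = j}"
      then have T: "finite T" "card T = j" by (auto intro: finite_subset)
      show "herm_det j (principal_sub (\<lambda>a b. A (sk k a) (sk k b)) T) = herm_det j (principal_sub A (sk k ` T))"
        using herm_det_cong[OF psub_C[OF T(1)]] T(2) by simp
    qed
    also have "\<dots> = (\<Sum>k<m. \<Sum>S\<in>{S. S \<subseteq> {..<m} - {k} \<and> card S = j}. herm_det j (principal_sub A S))"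
      by (rule sum.cong[OF refl]) (rule reindex_sk, simp)
    also have "\<dots> = (\<Sum>S\<in>{S. S \<subseteq> {..<m} \<and> card S = j}. real (m - j) * herm_det j (principal_sub A S))"
      by (rule double_count)
    finally have "real (m - j) * esym lam m j = real (m - j) * (\<Sum>S\<in>{S. S \<subseteq> {..<m} \<and> card S = j}. herm_det j (principal_sub A S))"
      by (simp add: sum_distrib_left)
    then show ?thesis using j m_def by simp
  qed
qed

theorem lemma3p2:
  fixes m :: nat and A :: qmat and lam :: "nat \<Rightarrow> real"
  assumes "hermitian m A"
    and "herm_eigenvalues m A lam"
  shows "\<forall>j\<in>{1..m}.
           (\<Sum>S\<in>{S. S \<subseteq> {..<m} \<and> card S = j}. \<Prod>i\<in>S. lam i)
         = (\<Sum>S\<in>{S. S \<subseteq> {..<m} \<and> card S = j}. herm_det j (principal_sub A S))"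
  using main_ind[OF assms(2)] unfolding esym_def by auto


end
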